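(* Let $M$ be an ACI-matrix over a field $\mathbb{F}$ and let $F_1,F_2$ be two overlapping (i.e. $F_1\cap F_2\neq\emptyset$) factor sets (resp. semifactor sets) of $M$. Then $F_1\cap F_2$ and $F_1\cup F_2$ are factor sets (resp. semifactor sets) of $M$.
   Context: Let $\mathbb{F}$ be a field. An ACI-matrix is a matrix with entries in $\mathbb{F}[x_1,\dots,x_k]$ whose entries are polynomials of degree at most one and such that no indeterminate appears in two different columns. A completion is an assignment of values in $\mathbb{F}$ to all indeterminates; $\mathrm{maxRank}(N)$ is the maximum rank of a completion. ACI-matrices (and blocks) of size $0\times q$ ($q>0$, wide degenerate), $p\times 0$ ($p>0$, tall degenerate) and $0\times0$ (void) are allowed. $N$ is FRmR if $\mathrm{maxRank}(N)=\mathrm{rows}(N)$, FCmR if $\mathrm{maxRank}(N)=\mathrm{cols}(N)$; by convention tall degenerate is FRmR, wide degenerate is FCmR, void is both. For an $m\times n$ block matrix $\begin{bmatrix} A & B\\ 0 & C\end{bmatrix}$ with lower-left $r\times s$ zero block, the zero block is Big if $r+s>\max\{m,n\}$, Medium if $r+s=\max\{m,n\}$. For $F=\{f_1<\dots<f_s\}\subseteq\{1,\dots,n\}$ with complement $\{g_1<\dots<g_{n-s}\}$, $Q_F$ is the $n\times n$ permutation matrix such that $MQ_F$ has as columns $f_1,\dots,f_s,g_1,\dots,g_{n-s}$ of $M$ in that order. For an $m\times n$ ACI-matrix $M$, $F$ is a factor set of $M$ if there is a nonsingular constant $m\times m$ matrix $R$ with $RMQ_F=\begin{bmatrix} A & B\\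 0 & C\end{bmatrix}$, where $A$ has $\#F$ columns, the zero block is Big, $A$ is FRmR and $C$ is FCmR; $F$ is a semifactor set if the same holds with the zero block Medium. *)

theory Defs
  imports "Jordan_Normal_Form.DL_Rank"
begin

text \<open>An affine polynomial (degree at most one) in the indeterminates x_1,...,x_k over 'a
  is represented by its coefficient function p :: nat => 'a:  p 0 is the constant term,
  p v (1 <= v <= k) the coefficient of x_v, and p v = 0 for v > k.\<close>

type_synonym 'a aff = "nat \<Rightarrow> 'a"

definition aff_poly :: "nat \<Rightarrow> 'a::zero aff \<Rightarrow> bool" where
  "aff_poly k p \<longleftrightarrow> (\<forall>v>k. p v = 0)"

definition aci_matrix :: "nat \<Rightarrow> 'a::zero aff mat \<Rightarrow> bool" where
  "aci_matrix k N \<longleftrightarrow>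
     (\<forall>i<dim_row N. \<forall>j<dim_col N. aff_poly k (N $$ (i,j))) \<and>
     (\<forall>v\<in>{1..k}. \<forall>i j i' j'. i < dim_row N \<longrightarrow> j < dim_col N \<longrightarrow> i' < dim_row N \<longrightarrow> j' < dim_col N \<longrightarrow>
        (N $$ (i,j)) v \<noteq> 0 \<longrightarrow> (N $$ (i',j')) v \<noteq> 0 \<longrightarrow> j = j')"

definition aff_eval :: "nat \<Rightarrow> 'a::comm_ring_1 aff \<Rightarrow> (nat \<Rightarrow> 'a) \<Rightarrow> 'a" where
  "aff_eval k p \<sigma> = p 0 + (\<Sum>v\<in>{1..k}. p v * \<sigma> v)"

definition completion :: "nat \<Rightarrow> 'a::comm_ring_1 aff mat \<Rightarrow> (nat \<Rightarrow> 'a) \<Rightarrow> 'a mat" where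
  "completion k N \<sigma> = mat (dim_row N) (dim_col N) (\<lambda>(i,j). aff_eval k (N $$ (i,j)) \<sigma>)"

definition mat_rank :: "'a::field mat \<Rightarrow> nat" where
  "mat_rank A = vec_space.rank (dim_row A) A"

definition maxRank :: "nat \<Rightarrow> 'a::field aff mat \<Rightarrow> nat" where
  "maxRank k N = Max {mat_rank (completion k N \<sigma>) | \<sigma>. True}"

text \<open>FRmR / FCmR, with the conventions for degenerate matrices
  (tall degenerate is FRmR, wide degenerate is FCmR, void is both).\<close>
definition FRmR :: "nat \<Rightarrow> 'a::field aff mat \<Rightarrow> bool" where
  "FRmR k N \<longleftrightarrow> dim_col N = 0 \<or> maxRank k N = dim_row N"

definition FCmR :: "nat \<Rightarrow> 'a::field aff mat \<Rightarrow> bool" where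
  "FCmR k N \<longleftrightarrow> dim_row N = 0 \<or> maxRank k N = dim_col N"

definition lmult :: "'a::comm_ring_1 mat \<Rightarrow> 'a aff mat \<Rightarrow> 'a aff mat" where
  "lmult R N = mat (dim_row R) (dim_col N) (\<lambda>(i,j) v. \<Sum>l<dim_col R. R $$ (i,l) * (N $$ (l,j)) v)"

definition rmult :: "'a::comm_ring_1 aff mat \<Rightarrow> 'a mat \<Rightarrow> 'a aff mat" where
  "rmult N Q = mat (dim_row N) (dim_col Q) (\<lambda>(i,j) v. \<Sum>l<dim_col N. (N $$ (i,l)) v * Q $$ (l,j))"

text \<open>Columns are indexed 0,...,n-1.  The list of column indices f_1<...<f_s, g_1<...<g_{n-s}.\<close>
definition col_order :: "nat \<Rightarrow> nat set \<Rightarrow> nat list" where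
  "col_order n F = sorted_list_of_set F @ sorted_list_of_set ({0..<n} - F)"

text \<open>Q_F: the n x n permutation matrix such that M Q_F has as columns f_1,...,f_s,g_1,...,g_{n-s}.\<close>
definition Q_mat :: "nat \<Rightarrow> nat set \<Rightarrow> 'a::comm_ring_1 mat" where
  "Q_mat n F = mat n n (\<lambda>(l,j). if l = col_order n F ! j then 1 else 0)"

text \<open>The block decomposition [A B; 0 C] of an m x n matrix P with an r x s lower-left block.\<close>
definition blockA :: "'a aff mat \<Rightarrow> nat \<Rightarrow> nat \<Rightarrow> 'a aff mat" where
  "blockA P r s = mat (dim_row P - r) s (\<lambda>(i,j). P $$ (i,j))"

definition blockC :: "'a aff mat \<Rightarrow> nat \<Rightarrow> nat \<Rightarrow> 'a aff mat" where
  "blockC P r s = mat r (dim_col P - s) (\<lambda>(i,j). P $$ (dim_row P - r + i, s + j))"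

definition zero_lower_left :: "'a::zero aff mat \<Rightarrow> nat \<Rightarrow> nat \<Rightarrow> bool" where
  "zero_lower_left P r s \<longleftrightarrow> (\<forall>i<r. \<forall>j<s. P $$ (dim_row P - r + i, j) = (\<lambda>v. 0))"

text \<open>Generic (semi)factor set definition; the predicate Z on (r,s,m,n) expresses the size
  condition on the zero block.\<close>
definition factor_like :: "(nat \<Rightarrow> nat \<Rightarrow> nat \<Rightarrow> nat \<Rightarrow> bool) \<Rightarrow> nat \<Rightarrow> 'a::field aff mat \<Rightarrow> nat set \<Rightarrow> bool" where
  "factor_like Z k M F \<longleftrightarrow> F \<subseteq> {0..<dim_col M} \<and>
     (\<exists>R r. R \<in> carrier_mat (dim_row M) (dim_row M) \<and> invertible_mat R \<and> r \<le> dim_row M \<and>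
        (let P = rmult (lmult R M) (Q_mat (dim_col M) F); s = card F in
           zero_lower_left P r s \<and> Z r s (dim_row M) (dim_col M) \<and>
           FRmR k (blockA P r s) \<and> FCmR k (blockC P r s)))"

definition factor_set :: "nat \<Rightarrow> 'a::field aff mat \<Rightarrow> nat set \<Rightarrow> bool" where
  "factor_set = factor_like (\<lambda>r s m n. r + s > max m n)"

definition semifactor_set :: "nat \<Rightarrow> 'a::field aff mat \<Rightarrow> nat set \<Rightarrow> bool" where
  "semifactor_set = factor_like (\<lambda>r s m n. r + s = max m n)"

end

theory Submission
  imports Defs
begin


definition ind :: "'a::field mat \<Rightarrow> nat set \<Rightarrow> bool" where
  "ind Y J \<longleftrightarrow> J \<subseteq> {..<dim_col Y} \<and>
     (\<forall>c \<in> carrier_vec (dim_col Y). (\<forall>j<dim_col Y. j \<notin> J \<longrightarrow> c $ j = 0) \<longrightarrow>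
        Y *\<^sub>v c = 0\<^sub>v (dim_row Y) \<longrightarrow> c = 0\<^sub>v (dim_col Y))"

lemma mult_mat_vec_sum:
  assumes "Y \<in> carrier_mat n nc" "c \<in> carrier_vec nc" "i < n"
  shows "(Y *\<^sub>v c) $ i = (\<Sum>j<nc. Y $$ (i,j) * c $ j)"
  using assms by (auto simp: mult_mat_vec_def scalar_prod_def lessThan_atLeast0 intro!: sum.cong)

lemma B1:
  fixes Y :: "'a::field mat"
  assumes Y: "Y \<in> carrier_mat n nc" and J: "ind Y J"
  shows "card J \<le> mat_rank Y"
proof -
  interpret vec_space "TYPE('a)" n .
  have Jsub: "J \<subseteq> {..<nc}" using J Y unfolding ind_def by auto
  have inj: "inj_on (col Y) J"
  proof
    fix j1 j2 assume j: "j1 \<in> J" "j2 \<in> J" "col Y j1 = col Y j2"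
    show "j1 = j2"
    proof (rule ccontr)
      assume ne: "j1 \<noteq> j2"
      define c where "c = vec nc (\<lambda>j. if j = j1 then (1::'a) else if j = j2 then -1 else 0)"
      have cc: "c \<in> carrier_vec nc" unfolding c_def by auto
      have "Y *\<^sub>v c = 0\<^sub>v n"
      proof (rule eq_vecI)
        fix i assume "i < dim_vec (0\<^sub>v n :: 'a vec)"
        hence i: "i < n" by auto
        have "(Y *\<^sub>v c) $ i = (\<Sum>j<nc. Y $$ (i,j) * c $ j)" using mult_mat_vec_sum[OF Y cc i] .
        also have "\<dots> = (\<Sum>j\<in>{j1,j2}. Y $$ (i,j) * c $ j)"
          by (rule sum.mono_neutral_right) (use Jsub j in \<open>auto simp: c_def\<close>)
        also have "\<dots> = Y $$ (i,j1) - Y $$ (i,j2)" using ne Jsub j by (auto simp: c_def subset_iff)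
        also have "\<dots> = 0"
          using j(3) Jsub j i Y by (metis col_def diff_self index_vec carrier_matD(1) lessThan_iff subsetD)
        finally show "(Y *\<^sub>v c) $ i = 0\<^sub>v n $ i" using i by simp
      qed (use Y in auto)
      moreover have "\<forall>j<dim_col Y. j \<notin> J \<longrightarrow> c $ j = 0" using j Y by (auto simp: c_def)
      ultimately have "c = 0\<^sub>v nc" using J Y cc unfolding ind_def by auto
      moreover have "c $ j1 = 1" using Jsub j by (auto simp: c_def)
      ultimately show False using Jsub j by auto
    qed
  qed
  define S where "S = col Y ` J"
  have cardS: "card S = card J" unfolding S_def using card_image[OF inj] .
  have Sc: "S \<subseteq> set (cols Y)" unfolding S_def using Jsub Y by (auto simp: cols_def)
  have Scar: "S \<subseteq> carrier_vec n" using Sc Y by (auto simp: cols_def)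
  have finS: "finite S" unfolding S_def using Jsub finite_subset by blast
  have li: "lin_indpt S"
  proof
    assume "lin_dep S"
    then obtain a v where a: "lincomb a S = 0\<^sub>v n" "v \<in> S" "a v \<noteq> 0"
      using finite_lin_dep[OF finS _ Scar] by auto
    define c where "c = vec nc (\<lambda>j. if j \<in> J then a (col Y j) else 0)"
    have cc: "c \<in> carrier_vec nc" unfolding c_def by auto
    have "Y *\<^sub>v c = 0\<^sub>v n"
    proof (rule eq_vecI)
      fix i assume "i < dim_vec (0\<^sub>v n :: 'a vec)"
      hence i: "i < n" by auto
      have "(Y *\<^sub>v c) $ i = (\<Sum>j<nc. Y $$ (i,j) * c $ j)" using mult_mat_vec_sum[OF Y cc i] .
      also have "\<dots> = (\<Sum>j\<in>J. Y $$ (i,j) * c $ j)"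
        by (rule sum.mono_neutral_right) (use Jsub in \<open>auto simp: c_def\<close>)
      also have "\<dots> = (\<Sum>j\<in>J. a (col Y j) * col Y j $ i)"
        using Jsub i Y by (intro sum.cong) (auto simp: c_def)
      also have "\<dots> = (\<Sum>x\<in>S. a x * x $ i)" unfolding S_def
        using sum.reindex[OF inj, of "\<lambda>x. a x * x $ i"] by simp
      also have "\<dots> = lincomb a S $ i" using lincomb_index[OF i Scar] by simp
      also have "\<dots> = 0" using a(1) i by simp
      finally show "(Y *\<^sub>v c) $ i = 0\<^sub>v n $ i" using i by simp
    qed (use Y in auto)
    moreover have "\<forall>j<dim_col Y. j \<notin> J \<longrightarrow> c $ j = 0" using Y by (auto simp: c_def)
    ultimately have c0: "c = 0\<^sub>v nc" using J Y cc unfolding ind_def by auto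
    obtain j where j: "j \<in> J" "v = col Y j" using a(2) S_def by auto
    have "c $ j = a v" using j Jsub by (auto simp: c_def)
    with c0 j Jsub a(3) show False by auto
  qed
  have "card S \<le> rank Y" using rank_ge_card_indpt[OF Y Sc li] .
  thus ?thesis using cardS Y unfolding mat_rank_def by simp
qed



lemma B2:
  fixes Y :: "'a::field mat"
  assumes Y: "Y \<in> carrier_mat n nc"
  shows "\<exists>J. ind Y J \<and> card J = mat_rank Y"
proof -
  interpret vec_space "TYPE('a)" n .
  obtain S where S: "maximal S (\<lambda>T. T \<subseteq> set (cols Y) \<and> lin_indpt T)"
    using maximal_exists[of "(\<lambda>T. T \<subseteq> set (cols Y) \<and> lin_indpt T)" "card (set (cols Y))" "{}"]
    by (meson List.finite_set card_mono empty_iff empty_subsetI finite_lin_indpt2 rev_finite_subset)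
  have rk: "rank Y = card S" using rank_card_indpt[OF Y S] .
  have Sc: "S \<subseteq> set (cols Y)" and li: "lin_indpt S" using S unfolding maximal_def by auto
  have Scar: "S \<subseteq> carrier_vec n" using Sc Y by (auto simp: cols_def)
  have finS: "finite S" using Sc finite_subset by blast
  define idx where "idx x = (SOME j. j < nc \<and> col Y j = x)" for x
  have idx: "idx x < nc \<and> col Y (idx x) = x" if "x \<in> S" for x
  proof -
    have "\<exists>j. j < nc \<and> col Y j = x" using that Sc Y by (force simp: cols_def)
    thus ?thesis unfolding idx_def by (rule someI_ex)
  qed
  have inj: "inj_on idx S" by (metis idx inj_onI)
  define J where "J = idx ` S"
  have cardJ: "card J = card S" unfolding J_def using card_image[OF inj] .
  have Jsub: "J \<subseteq> {..<nc}" using idx unfolding J_def by auto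
  have "ind Y J" unfolding ind_def
  proof (intro conjI ballI impI)
    show "J \<subseteq> {..<dim_col Y}" using Jsub Y by auto
    fix c :: "'a vec" assume cc: "c \<in> carrier_vec (dim_col Y)" and sup: "\<forall>j<dim_col Y. j \<notin> J \<longrightarrow> c $ j = 0"
      and z: "Y *\<^sub>v c = 0\<^sub>v (dim_row Y)"
    have cc': "c \<in> carrier_vec nc" using cc Y by auto
    define a where "a x = c $ idx x" for x
    have lc: "lincomb a S = 0\<^sub>v n"
    proof (rule eq_vecI)
      fix i assume "i < dim_vec (0\<^sub>v n :: 'a vec)"
      hence i: "i < n" by auto
      have "lincomb a S $ i = (\<Sum>x\<in>S. a x * x $ i)" using lincomb_index[OF i Scar] by simp
      also have "\<dots> = (\<Sum>x\<in>S. Y $$ (i, idx x) * c $ idx x)"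
      proof (intro sum.cong refl)
        fix x assume "x \<in> S"
        hence "x $ i = col Y (idx x) $ i" using idx by auto
        also have "\<dots> = Y $$ (i, idx x)" using idx[OF \<open>x \<in> S\<close>] i Y by (intro index_col) auto
        finally show "a x * x $ i = Y $$ (i, idx x) * c $ idx x" by (simp add: a_def mult.commute)
      qed
      also have "\<dots> = (\<Sum>j\<in>J. Y $$ (i,j) * c $ j)" unfolding J_def
        using sum.reindex[OF inj, of "\<lambda>j. Y $$ (i,j) * c $ j"] by simp
      also have "\<dots> = (\<Sum>j<nc. Y $$ (i,j) * c $ j)"
        by (rule sum.mono_neutral_left) (use Jsub sup Y in auto)
      also have "\<dots> = (Y *\<^sub>v c) $ i" using mult_mat_vec_sum[OF Y cc' i] by simp
      also have "\<dots> = 0" using z i Y by simp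
      finally show "lincomb a S $ i = 0\<^sub>v n $ i" using i by simp
    qed (simp add: lincomb_dim[OF finS Scar])
    have a0: "\<forall>x\<in>S. a x = 0"
    proof (rule ballI, rule ccontr)
      fix x assume "x \<in> S" "a x \<noteq> 0"
      with lc have "lin_dep S" using lin_dep_crit[OF finS subset_refl, where a=a and v=x] by auto
      thus False using li by simp
    qed
    show "c = 0\<^sub>v (dim_col Y)"
    proof (rule eq_vecI)
      fix j assume "j < dim_vec (0\<^sub>v (dim_col Y) :: 'a vec)"
      hence j: "j < nc" using Y by auto
      show "c $ j = 0\<^sub>v (dim_col Y) $ j"
      proof (cases "j \<in> J")
        case True
        then obtain x where "x \<in> S" "j = idx x" unfolding J_def by auto
        thus ?thesis using a0 j Y by (auto simp: a_def)
      qed (use sup j Y in auto)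
    qed (use cc in auto)
  qed
  thus ?thesis using cardJ rk unfolding mat_rank_def using Y by auto
qed

lemma rank_le_nr:
  fixes Y :: "'a::field mat"
  assumes Y: "Y \<in> carrier_mat n nc"
  shows "mat_rank Y \<le> n"
proof -
  interpret vec_space "TYPE('a)" n .
  obtain S where S: "maximal S (\<lambda>T. T \<subseteq> set (cols Y) \<and> lin_indpt T)"
    using maximal_exists[of "(\<lambda>T. T \<subseteq> set (cols Y) \<and> lin_indpt T)" "card (set (cols Y))" "{}"]
    by (meson List.finite_set card_mono empty_iff empty_subsetI finite_lin_indpt2 rev_finite_subset)
  have rk: "rank Y = card S" using rank_card_indpt[OF Y S] .
  have Sc: "S \<subseteq> set (cols Y)" and li: "lin_indpt S" using S unfolding maximal_def by auto
  have Scar: "S \<subseteq> carrier_vec n" using Sc Y by (auto simp: cols_def)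
  have "card S \<le> dim" using li_le_dim(2)[OF fin_dim _ li] Scar by simp
  thus ?thesis using rk dim_is_n Y unfolding mat_rank_def by simp
qed

lemma rank_le_nc':
  fixes Y :: "'a::field mat"
  assumes Y: "Y \<in> carrier_mat n nc"
  shows "mat_rank Y \<le> nc"
  using vec_space.rank_le_nc[OF Y] Y unfolding mat_rank_def by simp

lemma ind_card_le_nr:
  fixes Y :: "'a::field mat"
  assumes Y: "Y \<in> carrier_mat n nc" and "ind Y J"
  shows "card J \<le> n"
  using B1[OF assms] rank_le_nr[OF Y] by linarith



lemma mult_mat_vec_zero:
  assumes "A \<in> carrier_mat m n"
  shows "A *\<^sub>v 0\<^sub>v n = (0\<^sub>v m :: 'a::semiring_0 vec)"
proof (rule eq_vecI)
  fix i assume i: "i < dim_vec (0\<^sub>v m :: 'a vec)"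
  have r: "row A i \<in> carrier_vec n" using assms by (simp add: carrier_vecI)
  have "(A *\<^sub>v 0\<^sub>v n) $ i = row A i \<bullet> 0\<^sub>v n" using i assms by simp
  also have "\<dots> = 0" using scalar_prod_right_zero[OF r] .
  finally show "(A *\<^sub>v 0\<^sub>v n) $ i = (0\<^sub>v m :: 'a vec) $ i" using i by simp
qed (use assms in simp)

lemma ind_mono: "ind Y J \<Longrightarrow> J' \<subseteq> J \<Longrightarrow> ind Y J'"
  unfolding ind_def by blast

lemma invertible_cancel:
  fixes R :: "'a::field mat"
  assumes R: "R \<in> carrier_mat m m" and inv: "invertible_mat R" and x: "x \<in> carrier_vec m"
    and z: "R *\<^sub>v x = 0\<^sub>v m"
  shows "x = 0\<^sub>v m"
proof -
  obtain B where B: "R * B = 1\<^sub>m m" "B * R = 1\<^sub>m (dim_row B)"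
    using inv R unfolding invertible_mat_def inverts_mat_def by auto
  have "dim_row B = m" using B(2) R by (metis carrier_matD(2) index_mult_mat(3) index_one_mat(3))
  hence B': "B \<in> carrier_mat m m" using B(1) R by (metis carrier_matI index_mult_mat(3) index_one_mat(3))
  have "x = (B * R) *\<^sub>v x" using B(2) \<open>dim_row B = m\<close> x by simp
  also have "\<dots> = B *\<^sub>v (R *\<^sub>v x)" using B' R x by simp
  also have "\<dots> = 0\<^sub>v m" using z mult_mat_vec_zero[OF B'] by simp
  finally show ?thesis .
qed

lemma ind_mult_left:
  fixes R :: "'a::field mat"
  assumes R: "R \<in> carrier_mat m m" and inv: "invertible_mat R" and Y: "Y \<in> carrier_mat m n"
  shows "ind (R * Y) J \<longleftrightarrow> ind Y J"
proof -
  have RY: "R * Y \<in> carrier_mat m n" using mult_carrier_mat[OF R Y] .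
  have eq: "((R * Y) *\<^sub>v c = 0\<^sub>v m) = (Y *\<^sub>v c = 0\<^sub>v m)" if c: "c \<in> carrier_vec n" for c
  proof
    assume a: "(R * Y) *\<^sub>v c = 0\<^sub>v m"
    have "(R * Y) *\<^sub>v c = R *\<^sub>v (Y *\<^sub>v c)" using assoc_mult_mat_vec[OF R Y c] .
    with a have "R *\<^sub>v (Y *\<^sub>v c) = 0\<^sub>v m" by simp
    moreover have "Y *\<^sub>v c \<in> carrier_vec m" using mult_mat_vec_carrier[OF Y c] .
    ultimately show "Y *\<^sub>v c = 0\<^sub>v m" using invertible_cancel[OF R inv] by blast
  next
    assume a: "Y *\<^sub>v c = 0\<^sub>v m"
    have "(R * Y) *\<^sub>v c = R *\<^sub>v (Y *\<^sub>v c)" using assoc_mult_mat_vec[OF R Y c] .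
    also have "\<dots> = 0\<^sub>v m" using a mult_mat_vec_zero[OF R] by simp
    finally show "(R * Y) *\<^sub>v c = 0\<^sub>v m" .
  qed
  have d: "dim_col (R*Y) = n" "dim_row (R*Y) = m" "dim_col Y = n" "dim_row Y = m" using RY Y carrier_matD by blast+
  show ?thesis unfolding ind_def d using eq by blast
qed

lemma rank_mult_left:
  fixes R :: "'a::field mat"
  assumes R: "R \<in> carrier_mat m m" and inv: "invertible_mat R" and Y: "Y \<in> carrier_mat m n"
  shows "mat_rank (R * Y) = mat_rank Y"
proof -
  have RY: "R * Y \<in> carrier_mat m n" using mult_carrier_mat[OF R Y] .
  obtain J where J: "ind Y J" "card J = mat_rank Y" using B2[OF Y] by blast
  obtain J' where J': "ind (R * Y) J'" "card J' = mat_rank (R * Y)" using B2[OF RY] by blast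
  have i1: "ind (R * Y) J" using J(1) ind_mult_left[OF R inv Y] by blast
  have "mat_rank Y \<le> mat_rank (R * Y)" using B1[OF RY i1] J(2) by linarith
  moreover have i2: "ind Y J'" using J'(1) ind_mult_left[OF R inv Y] by blast
  have "mat_rank (R * Y) \<le> mat_rank Y" using B1[OF Y i2] J'(2) by linarith
  ultimately show ?thesis by linarith
qed



lemma rank_perm_le:
  fixes Y :: "'a::field mat"
  assumes Y: "Y \<in> carrier_mat m n" and pi: "bij_betw \<pi> {..<n} {..<n}"
  shows "mat_rank (mat m n (\<lambda>(i,j). Y $$ (i, \<pi> j))) \<le> mat_rank Y"
proof -
  let ?Y = "mat m n (\<lambda>(i,j). Y $$ (i, \<pi> j))"
  have Y': "?Y \<in> carrier_mat m n" by simp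
  obtain J where J: "ind ?Y J" "card J = mat_rank ?Y" using B2[OF Y'] by blast
  have Jsub: "J \<subseteq> {..<n}" using J unfolding ind_def by auto
  have injJ: "inj_on \<pi> J" using pi Jsub bij_betw_imp_inj_on inj_on_subset by blast
  have "ind Y (\<pi> ` J)" unfolding ind_def
  proof (intro conjI ballI impI)
    show "\<pi> ` J \<subseteq> {..<dim_col Y}" using Jsub pi Y bij_betwE by fastforce
    fix c :: "'a vec" assume c: "c \<in> carrier_vec (dim_col Y)" and sup: "\<forall>j<dim_col Y. j \<notin> \<pi> ` J \<longrightarrow> c $ j = 0"
      and z: "Y *\<^sub>v c = 0\<^sub>v (dim_row Y)"
    define c' where "c' = vec n (\<lambda>j. c $ \<pi> j)"
    have c'c: "c' \<in> carrier_vec n" by (simp add: c'_def)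
    have "?Y *\<^sub>v c' = 0\<^sub>v m"
    proof (rule eq_vecI)
      fix i assume "i < dim_vec (0\<^sub>v m :: 'a vec)"
      hence i: "i < m" by simp
      have "(?Y *\<^sub>v c') $ i = (\<Sum>j<n. Y $$ (i, \<pi> j) * c $ \<pi> j)"
        using mult_mat_vec_sum[OF Y' c'c i] i by (simp add: c'_def)
      also have "\<dots> = (\<Sum>l<n. Y $$ (i, l) * c $ l)"
        using sum.reindex_bij_betw[OF pi, of "\<lambda>l. Y $$ (i, l) * c $ l"] by simp
      also have "\<dots> = (Y *\<^sub>v c) $ i" using mult_mat_vec_sum[OF Y _ i] c Y by simp
      also have "\<dots> = 0" using z i Y by simp
      finally show "(?Y *\<^sub>v c') $ i = 0\<^sub>v m $ i" using i by simp
    qed simp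
    moreover have "\<forall>j<dim_col ?Y. j \<notin> J \<longrightarrow> c' $ j = 0"
    proof (intro allI impI)
      fix j assume j: "j < dim_col ?Y" "j \<notin> J"
      hence "\<pi> j \<notin> \<pi> ` J" using pi Jsub j by (auto simp: bij_betw_def inj_on_def)
      moreover have "\<pi> j < n" using pi j bij_betwE by fastforce
      ultimately show "c' $ j = 0" using sup j Y by (auto simp: c'_def)
    qed
    ultimately have c'0: "c' = 0\<^sub>v n" using J(1) c'c unfolding ind_def by auto
    show "c = 0\<^sub>v (dim_col Y)"
    proof (rule eq_vecI)
      fix l assume "l < dim_vec (0\<^sub>v (dim_col Y) :: 'a vec)"
      hence l: "l < n" using Y by simp
      then obtain j where j: "j < n" "\<pi> j = l" using pi by (metis bij_betw_def imageE lessThan_iff)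
      have "c $ l = c' $ j" using j by (simp add: c'_def)
      thus "c $ l = 0\<^sub>v (dim_col Y) $ l" using c'0 j l Y by simp
    qed (use c in simp)
  qed
  hence "card (\<pi> ` J) \<le> mat_rank Y" using B1[OF Y] by blast
  thus ?thesis using card_image[OF injJ] J(2) by simp
qed

lemma rank_perm:
  fixes Y :: "'a::field mat"
  assumes Y: "Y \<in> carrier_mat m n" and pi: "bij_betw \<pi> {..<n} {..<n}"
  shows "mat_rank (mat m n (\<lambda>(i,j). Y $$ (i, \<pi> j))) = mat_rank Y"
proof -
  let ?Y = "mat m n (\<lambda>(i,j). Y $$ (i, \<pi> j))"
  define \<pi>' where "\<pi>' = the_inv_into {..<n} \<pi>"
  have pi': "bij_betw \<pi>' {..<n} {..<n}" unfolding \<pi>'_def using bij_betw_the_inv_into[OF pi] .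
  have "mat m n (\<lambda>(i,j). ?Y $$ (i, \<pi>' j)) = Y"
  proof (rule eq_matI)
    fix i j assume ij: "i < dim_row Y" "j < dim_col Y"
    have "\<pi>' j < n" using pi' ij Y bij_betwE by fastforce
    moreover have "\<pi> (\<pi>' j) = j" unfolding \<pi>'_def using f_the_inv_into_f_bij_betw[OF pi] ij Y by auto
    ultimately show "mat m n (\<lambda>(i,j). ?Y $$ (i, \<pi>' j)) $$ (i, j) = Y $$ (i, j)" using ij Y by auto
  qed (use Y in auto)
  hence "mat_rank Y \<le> mat_rank ?Y" using rank_perm_le[of ?Y m n \<pi>'] pi' by simp
  thus ?thesis using rank_perm_le[OF Y pi] by simp
qed



lemma sum_split_at:
  assumes "s \<le> (n::nat)"
  shows "(\<Sum>j<n. f j) = (\<Sum>j<s. f j) + (\<Sum>j<n-s. f (s+j))"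
proof -
  have "(\<Sum>j<n. f j) = (\<Sum>j\<in>{0..<s}. f j) + (\<Sum>j\<in>{s..<n}. f j)"
    using sum.atLeastLessThan_concat[of 0 s n f] assms by (simp add: atLeast0LessThan)
  also have "(\<Sum>j\<in>{s..<n}. f j) = (\<Sum>j\<in>{0+s..<(n-s)+s}. f j)" using assms by simp
  also have "\<dots> = (\<Sum>j\<in>{0..<n-s}. f (j+s))" by (rule sum.shift_bounds_nat_ivl)
  finally show ?thesis by (simp add: atLeast0LessThan add.commute)
qed

lemma blk_a:
  fixes X :: "'a::field mat"
  assumes X: "X \<in> carrier_mat m n" and rm: "r \<le> m" and sn: "s \<le> n"
    and zero: "\<And>i j. i < r \<Longrightarrow> j < s \<Longrightarrow> X $$ (m-r+i, j) = 0"
  shows "mat_rank X \<le> mat_rank (mat (m-r) s (\<lambda>(i,j). X $$ (i,j))) + (n - s)"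
proof -
  let ?A = "mat (m-r) s (\<lambda>(i,j). X $$ (i,j))"
  have A: "?A \<in> carrier_mat (m-r) s" by simp
  obtain J where J: "ind X J" "card J = mat_rank X" using B2[OF X] by blast
  have Jsub: "J \<subseteq> {..<n}" using J(1) X unfolding ind_def by auto
  define J1 where "J1 = J \<inter> {..<s}"
  define J2 where "J2 = J - {..<s}"
  have finJ: "finite J" using Jsub finite_subset by blast
  have cardJ: "card J = card J1 + card J2" unfolding J1_def J2_def
    using card_Int_Diff[OF finJ] by simp
  have "J2 \<subseteq> {s..<n}" using Jsub unfolding J2_def by auto
  hence cJ2: "card J2 \<le> n - s" using card_mono[of "{s..<n}" J2] by simp
  have "ind ?A J1" unfolding ind_def
  proof (intro conjI ballI impI)
    show "J1 \<subseteq> {..<dim_col ?A}" unfolding J1_def by auto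
    fix c :: "'a vec" assume c: "c \<in> carrier_vec (dim_col ?A)" and sup: "\<forall>j<dim_col ?A. j \<notin> J1 \<longrightarrow> c $ j = 0"
      and z: "?A *\<^sub>v c = 0\<^sub>v (dim_row ?A)"
    have cs: "c \<in> carrier_vec s" using c by simp
    define c' where "c' = vec n (\<lambda>j. if j < s then c $ j else 0)"
    have c'c: "c' \<in> carrier_vec n" unfolding c'_def by simp
    have "X *\<^sub>v c' = 0\<^sub>v m"
    proof (rule eq_vecI)
      fix i assume "i < dim_vec (0\<^sub>v m :: 'a vec)"
      hence i: "i < m" by simp
      have "(X *\<^sub>v c') $ i = (\<Sum>j<n. X $$ (i,j) * c' $ j)" using mult_mat_vec_sum[OF X c'c i] .
      also have "\<dots> = (\<Sum>j<s. X $$ (i,j) * c' $ j) + (\<Sum>j<n-s. X $$ (i,s+j) * c' $ (s+j))"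
        using sum_split_at[OF sn] .
      also have "(\<Sum>j<n-s. X $$ (i,s+j) * c' $ (s+j)) = 0"
        by (rule sum.neutral) (auto simp: c'_def)
      also have "(\<Sum>j<s. X $$ (i,j) * c' $ j) = (\<Sum>j<s. X $$ (i,j) * c $ j)"
        using sn by (intro sum.cong) (auto simp: c'_def)
      finally have eq: "(X *\<^sub>v c') $ i = (\<Sum>j<s. X $$ (i,j) * c $ j)" by simp
      show "(X *\<^sub>v c') $ i = 0\<^sub>v m $ i"
      proof (cases "i < m - r")
        case True
        have "(\<Sum>j<s. X $$ (i,j) * c $ j) = (?A *\<^sub>v c) $ i"
          using mult_mat_vec_sum[OF A cs True] True by simp
        also have "\<dots> = 0" using z True by simp
        finally show ?thesis using eq i by simp
      next
        case False
        have "(\<Sum>j<s. X $$ (i,j) * c $ j) = 0"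
        proof (rule sum.neutral, rule ballI)
          fix j assume "j \<in> {..<s}"
          hence "X $$ (m - r + (i - (m - r)), j) = 0" using zero[of "i - (m-r)" j] False i rm by simp
          thus "X $$ (i,j) * c $ j = 0" using False by simp
        qed
        thus ?thesis using eq i by simp
      qed
    qed (use X in simp)
    moreover have "\<forall>j<dim_col X. j \<notin> J \<longrightarrow> c' $ j = 0"
      using sup X unfolding J1_def c'_def by auto
    ultimately have c'0: "c' = 0\<^sub>v n" using J(1) c'c X unfolding ind_def by auto
    show "c = 0\<^sub>v (dim_col ?A)"
    proof (rule eq_vecI)
      fix j assume "j < dim_vec (0\<^sub>v (dim_col ?A) :: 'a vec)"
      hence j: "j < s" by simp
      have "c $ j = c' $ j" using j sn by (simp add: c'_def)
      thus "c $ j = 0\<^sub>v (dim_col ?A) $ j" using c'0 j sn by simp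
    qed (use c in simp)
  qed
  hence "card J1 \<le> mat_rank ?A" using B1[OF A] by blast
  thus ?thesis using cardJ cJ2 J(2) by linarith
qed

lemma blk_c:
  fixes X :: "'a::field mat"
  assumes X: "X \<in> carrier_mat m n" and rm: "r \<le> m" and sn: "s \<le> n"
    and zero: "\<And>i j. i < r \<Longrightarrow> j < s \<Longrightarrow> X $$ (m-r+i, j) = 0"
  shows "mat_rank (mat (m-r) s (\<lambda>(i,j). X $$ (i,j))) + mat_rank (mat r (n-s) (\<lambda>(i,j). X $$ (m-r+i, s+j)))
     \<le> mat_rank X"
proof -
  let ?A = "mat (m-r) s (\<lambda>(i,j). X $$ (i,j))"
  let ?C = "mat r (n-s) (\<lambda>(i,j). X $$ (m-r+i, s+j))"
  have A: "?A \<in> carrier_mat (m-r) s" by simp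
  have C: "?C \<in> carrier_mat r (n-s)" by simp
  obtain JA where JA: "ind ?A JA" "card JA = mat_rank ?A" using B2[OF A] by blast
  obtain JC where JC: "ind ?C JC" "card JC = mat_rank ?C" using B2[OF C] by blast
  have JAs: "JA \<subseteq> {..<s}" using JA(1) unfolding ind_def by auto
  have JCs: "JC \<subseteq> {..<n-s}" using JC(1) unfolding ind_def by auto
  define J where "J = JA \<union> (\<lambda>j. s + j) ` JC"
  have finA: "finite JA" using JAs finite_subset by blast
  have finC: "finite JC" using JCs finite_subset by blast
  have disj: "JA \<inter> (\<lambda>j. s + j) ` JC = {}" using JAs by auto
  have cardJ: "card J = card JA + card JC" unfolding J_def
    using card_Un_disjoint[OF finA _ disj] finC card_image[of "\<lambda>j. s + j" JC] by (simp add: inj_on_def)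
  have "ind X J" unfolding ind_def
  proof (intro conjI ballI impI)
    show "J \<subseteq> {..<dim_col X}" using JAs JCs sn X unfolding J_def by auto
    fix c :: "'a vec" assume c: "c \<in> carrier_vec (dim_col X)" and sup: "\<forall>j<dim_col X. j \<notin> J \<longrightarrow> c $ j = 0"
      and z: "X *\<^sub>v c = 0\<^sub>v (dim_row X)"
    have cn: "c \<in> carrier_vec n" using c X by simp
    have zi: "(\<Sum>j<n. X $$ (i,j) * c $ j) = 0" if i: "i < m" for i
    proof -
      have "(\<Sum>j<n. X $$ (i,j) * c $ j) = (X *\<^sub>v c) $ i" using mult_mat_vec_sum[OF X cn i] by simp
      also have "\<dots> = 0" using z i X by simp
      finally show ?thesis .
    qed
    define c2 where "c2 = vec (n-s) (\<lambda>j. c $ (s+j))"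
    have c2c: "c2 \<in> carrier_vec (n-s)" unfolding c2_def by simp
    have "?C *\<^sub>v c2 = 0\<^sub>v r"
    proof (rule eq_vecI)
      fix i assume "i < dim_vec (0\<^sub>v r :: 'a vec)"
      hence i: "i < r" by simp
      have "(?C *\<^sub>v c2) $ i = (\<Sum>j<n-s. X $$ (m-r+i, s+j) * c $ (s+j))"
        using mult_mat_vec_sum[OF C c2c i] i by (simp add: c2_def)
      also have "\<dots> = (\<Sum>j<s. X $$ (m-r+i,j) * c $ j) + (\<Sum>j<n-s. X $$ (m-r+i, s+j) * c $ (s+j))"
        using zero i by simp
      also have "\<dots> = (\<Sum>j<n. X $$ (m-r+i,j) * c $ j)" using sum_split_at[OF sn, of "\<lambda>j. X $$ (m-r+i,j) * c $ j"] by simp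
      also have "\<dots> = 0" using zi[of "m-r+i"] i rm by simp
      finally show "(?C *\<^sub>v c2) $ i = 0\<^sub>v r $ i" using i by simp
    qed simp
    moreover have "\<forall>j<dim_col ?C. j \<notin> JC \<longrightarrow> c2 $ j = 0"
    proof (intro allI impI)
      fix j assume j: "j < dim_col ?C" "j \<notin> JC"
      hence "s + j \<notin> J" using JAs unfolding J_def by auto
      thus "c2 $ j = 0" using sup j X sn by (auto simp: c2_def)
    qed
    ultimately have c20: "c2 = 0\<^sub>v (n-s)" using JC(1) c2c unfolding ind_def by auto
    have hi: "c $ j = 0" if "s \<le> j" "j < n" for j
    proof -
      have "s + (j - s) = j" using that by simp
      hence "c $ j = c2 $ (j - s)" using that by (simp add: c2_def)
      thus ?thesis using c20 that by simp
    qed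
    define c1 where "c1 = vec s (\<lambda>j. c $ j)"
    have c1c: "c1 \<in> carrier_vec s" unfolding c1_def by simp
    have "?A *\<^sub>v c1 = 0\<^sub>v (m-r)"
    proof (rule eq_vecI)
      fix i assume "i < dim_vec (0\<^sub>v (m-r) :: 'a vec)"
      hence i: "i < m - r" by simp
      have "(?A *\<^sub>v c1) $ i = (\<Sum>j<s. X $$ (i,j) * c $ j)"
        using mult_mat_vec_sum[OF A c1c i] i by (simp add: c1_def)
      also have "\<dots> = (\<Sum>j<s. X $$ (i,j) * c $ j) + (\<Sum>j<n-s. X $$ (i, s+j) * c $ (s+j))"
        using hi by simp
      also have "\<dots> = (\<Sum>j<n. X $$ (i,j) * c $ j)" using sum_split_at[OF sn, of "\<lambda>j. X $$ (i,j) * c $ j"] by simp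
      also have "\<dots> = 0" using zi[of i] i by simp
      finally show "(?A *\<^sub>v c1) $ i = 0\<^sub>v (m-r) $ i" using i by simp
    qed simp
    moreover have "\<forall>j<dim_col ?A. j \<notin> JA \<longrightarrow> c1 $ j = 0"
    proof (intro allI impI)
      fix j assume j: "j < dim_col ?A" "j \<notin> JA"
      hence "j \<notin> J" unfolding J_def by auto
      thus "c1 $ j = 0" using sup j X sn by (auto simp: c1_def)
    qed
    ultimately have c10: "c1 = 0\<^sub>v s" using JA(1) c1c unfolding ind_def by auto
    show "c = 0\<^sub>v (dim_col X)"
    proof (rule eq_vecI)
      fix j assume "j < dim_vec (0\<^sub>v (dim_col X) :: 'a vec)"
      hence j: "j < n" using X by simp
      show "c $ j = 0\<^sub>v (dim_col X) $ j"
      proof (cases "j < s")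
        case True
        have "c $ j = c1 $ j" using True by (simp add: c1_def)
        thus ?thesis using c10 True j X by simp
      next
        case False
        thus ?thesis using hi[of j] j X by simp
      qed
    qed (use c in simp)
  qed
  hence "card J \<le> mat_rank X" using B1[OF X] by blast
  thus ?thesis using cardJ JA(2) JC(2) by linarith
qed



lemma blk_b:
  fixes X :: "'a::field mat"
  assumes X: "X \<in> carrier_mat m n" and rm: "r \<le> m" and sn: "s \<le> n"
    and zero: "\<And>i j. i < r \<Longrightarrow> j < s \<Longrightarrow> X $$ (m-r+i, j) = 0"
  shows "mat_rank X \<le> (m - r) + mat_rank (mat r (n-s) (\<lambda>(i,j). X $$ (m-r+i, s+j)))"
proof -
  let ?C = "mat r (n-s) (\<lambda>(i,j). X $$ (m-r+i, s+j))"
  have C: "?C \<in> carrier_mat r (n-s)" by simp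
  define T where "T = mat m n (\<lambda>(i,j). if i < m-r then X $$ (i,j) else 0)"
  define B where "B = mat m n (\<lambda>(i,j). if i < m-r then 0 else X $$ (i,j))"
  have T: "T \<in> carrier_mat m n" unfolding T_def by simp
  have B: "B \<in> carrier_mat m n" unfolding B_def by simp
  have XTB: "X = T + B"
    by (rule eq_matI) (use X in \<open>auto simp: T_def B_def\<close>)
  have sub: "mat_rank X \<le> mat_rank T + mat_rank B"
    using vec_space.rank_subadditive[OF T B] X T B unfolding mat_rank_def XTB by simp
  let ?T' = "mat (m-r) n (\<lambda>(i,j). X $$ (i,j))"
  have T': "?T' \<in> carrier_mat (m-r) n" by simp
  obtain JT where JT: "ind T JT" "card JT = mat_rank T" using B2[OF T] by blast
  have "ind ?T' JT" unfolding ind_def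
  proof (intro conjI ballI impI)
    show "JT \<subseteq> {..<dim_col ?T'}" using JT(1) T unfolding ind_def by auto
    fix c :: "'a vec" assume c: "c \<in> carrier_vec (dim_col ?T')" and sup: "\<forall>j<dim_col ?T'. j \<notin> JT \<longrightarrow> c $ j = 0"
      and z: "?T' *\<^sub>v c = 0\<^sub>v (dim_row ?T')"
    have cn: "c \<in> carrier_vec n" using c by simp
    have "T *\<^sub>v c = 0\<^sub>v m"
    proof (rule eq_vecI)
      fix i assume "i < dim_vec (0\<^sub>v m :: 'a vec)"
      hence i: "i < m" by simp
      show "(T *\<^sub>v c) $ i = 0\<^sub>v m $ i"
      proof (cases "i < m - r")
        case True
        have "(T *\<^sub>v c) $ i = (\<Sum>j<n. X $$ (i,j) * c $ j)"
          using mult_mat_vec_sum[OF T cn i] True i by (simp add: T_def)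
        also have "\<dots> = (?T' *\<^sub>v c) $ i" using mult_mat_vec_sum[OF T' cn True] True by simp
        also have "\<dots> = 0" using z True by simp
        finally show ?thesis using i by simp
      next
        case False
        have "(T *\<^sub>v c) $ i = (\<Sum>j<n. 0)"
          using mult_mat_vec_sum[OF T cn i] False i by (simp add: T_def)
        thus ?thesis using i by simp
      qed
    qed (use T in simp)
    moreover have "\<forall>j<dim_col T. j \<notin> JT \<longrightarrow> c $ j = 0" using sup T by simp
    ultimately show "c = 0\<^sub>v (dim_col ?T')" using JT(1) cn T unfolding ind_def by auto
  qed
  hence rT: "mat_rank T \<le> m - r" using B1[OF T'] rank_le_nr[OF T'] JT(2) by fastforce
  obtain JB where JB: "ind B JB" "card JB = mat_rank B" using B2[OF B] by blast
  have JBn: "JB \<subseteq> {..<n}" using JB(1) B unfolding ind_def by auto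
  have Bz: "B $$ (i,j) = 0" if "i < m" "j < s" for i j
  proof (cases "i < m - r")
    case False
    have "X $$ (m - r + (i - (m-r)), j) = 0" using zero[of "i - (m-r)" j] that False by simp
    thus ?thesis using that False sn by (simp add: B_def)
  qed (use that sn in \<open>simp add: B_def\<close>)
  have JBs: "s \<le> j" if "j \<in> JB" for j
  proof (rule ccontr)
    assume "\<not> s \<le> j"
    hence js: "j < s" by simp
    have jn: "j < n" using that JBn by auto
    define u :: "'a vec" where "u = unit_vec n j"
    have uc: "u \<in> carrier_vec n" unfolding u_def by simp
    have "B *\<^sub>v u = 0\<^sub>v m"
    proof (rule eq_vecI)
      fix i assume "i < dim_vec (0\<^sub>v m :: 'a vec)"
      hence i: "i < m" by simp
      have "(B *\<^sub>v u) $ i = (\<Sum>l<n. B $$ (i,l) * u $ l)" using mult_mat_vec_sum[OF B uc i] .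
      also have "\<dots> = (\<Sum>l<n. 0)"
      proof (rule sum.cong[OF refl])
        fix l assume "l \<in> {..<n}"
        thus "B $$ (i,l) * u $ l = 0" using Bz[OF i js] jn by (cases "l = j") (auto simp: u_def unit_vec_def)
      qed
      finally show "(B *\<^sub>v u) $ i = 0\<^sub>v m $ i" using i by simp
    qed (use B in simp)
    moreover have "\<forall>l<dim_col B. l \<notin> JB \<longrightarrow> u $ l = 0" using that B jn by (auto simp: u_def)
    ultimately have "u = 0\<^sub>v n" using JB(1) uc B unfolding ind_def by auto
    moreover have "u $ j = 1" using jn by (simp add: u_def)
    ultimately show False using jn by simp
  qed
  define JC where "JC = (\<lambda>j. j - s) ` JB"
  have injB: "inj_on (\<lambda>j. j - s) JB"
  proof (rule inj_onI)
    fix x y assume "x \<in> JB" "y \<in> JB" "x - s = y - s"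
    moreover have "s \<le> x" "s \<le> y" using JBs \<open>x \<in> JB\<close> \<open>y \<in> JB\<close> by auto
    ultimately show "x = y" by linarith
  qed
  have "ind ?C JC" unfolding ind_def
  proof (intro conjI ballI impI)
    show "JC \<subseteq> {..<dim_col ?C}" using JBn JBs unfolding JC_def by fastforce
    fix c :: "'a vec" assume c: "c \<in> carrier_vec (dim_col ?C)" and sup: "\<forall>j<dim_col ?C. j \<notin> JC \<longrightarrow> c $ j = 0"
      and z: "?C *\<^sub>v c = 0\<^sub>v (dim_row ?C)"
    have cc: "c \<in> carrier_vec (n-s)" using c by simp
    define c' where "c' = vec n (\<lambda>j. if s \<le> j then c $ (j - s) else 0)"
    have c'c: "c' \<in> carrier_vec n" unfolding c'_def by simp
    have "B *\<^sub>v c' = 0\<^sub>v m"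
    proof (rule eq_vecI)
      fix i assume "i < dim_vec (0\<^sub>v m :: 'a vec)"
      hence i: "i < m" by simp
      have "(B *\<^sub>v c') $ i = (\<Sum>j<n. B $$ (i,j) * c' $ j)" using mult_mat_vec_sum[OF B c'c i] .
      also have "\<dots> = (\<Sum>j<s. B $$ (i,j) * c' $ j) + (\<Sum>j<n-s. B $$ (i,s+j) * c' $ (s+j))"
        using sum_split_at[OF sn] .
      also have "(\<Sum>j<s. B $$ (i,j) * c' $ j) = 0" using Bz[OF i] by simp
      also have "(\<Sum>j<n-s. B $$ (i,s+j) * c' $ (s+j)) = (\<Sum>j<n-s. B $$ (i,s+j) * c $ j)"
        by (intro sum.cong) (auto simp: c'_def)
      finally have eq: "(B *\<^sub>v c') $ i = (\<Sum>j<n-s. B $$ (i,s+j) * c $ j)" by simp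
      show "(B *\<^sub>v c') $ i = 0\<^sub>v m $ i"
      proof (cases "i < m - r")
        case True
        thus ?thesis using eq i by (simp add: B_def)
      next
        case False
        define i' where "i' = i - (m - r)"
        have i': "i' < r" "i = m - r + i'" using False i rm unfolding i'_def by auto
        have "(\<Sum>j<n-s. B $$ (i,s+j) * c $ j) = (\<Sum>j<n-s. X $$ (m-r+i',s+j) * c $ j)"
          using False i i' by (intro sum.cong) (auto simp: B_def)
        also have "\<dots> = (?C *\<^sub>v c) $ i'" using mult_mat_vec_sum[OF C cc i'(1)] i'(1) by simp
        also have "\<dots> = 0" using z i'(1) by simp
        finally show ?thesis using eq i by simp
      qed
    qed (use B in simp)
    moreover have "\<forall>j<dim_col B. j \<notin> JB \<longrightarrow> c' $ j = 0"
    proof (intro allI impI)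
      fix j assume j: "j < dim_col B" "j \<notin> JB"
      show "c' $ j = 0"
      proof (cases "s \<le> j")
        case True
        have "j - s \<notin> JC"
        proof
          assume "j - s \<in> JC"
          then obtain j0 where "j0 \<in> JB" "j - s = j0 - s" unfolding JC_def by auto
          moreover have "s \<le> j0" using JBs \<open>j0 \<in> JB\<close> by auto
          ultimately have "j = j0" using True by linarith
          thus False using j \<open>j0 \<in> JB\<close> by simp
        qed
        moreover have "j - s < n - s" using j True B by auto
        ultimately show ?thesis using sup j True B by (simp add: c'_def)
      qed (use j B in \<open>simp add: c'_def\<close>)
    qed
    ultimately have c'0: "c' = 0\<^sub>v n" using JB(1) c'c B unfolding ind_def by auto
    show "c = 0\<^sub>v (dim_col ?C)"
    proof (rule eq_vecI)
      fix l assume "l < dim_vec (0\<^sub>v (dim_col ?C) :: 'a vec)"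
      hence l: "l < n - s" by simp
      have "c' $ (s + l) = c $ l" using l by (simp add: c'_def)
      thus "c $ l = 0\<^sub>v (dim_col ?C) $ l" using c'0 l by simp
    qed (use c in simp)
  qed
  hence "card JC \<le> mat_rank ?C" using B1[OF C] by blast
  hence rB: "mat_rank B \<le> mat_rank ?C" using card_image[OF injB] JB(2) unfolding JC_def by simp
  show ?thesis using sub rT rB by linarith
qed



lemma col_order_props:
  assumes F: "F \<subseteq> {0..<n}"
  shows "length (col_order n F) = n" "distinct (col_order n F)" "set (col_order n F) = {0..<n}"
proof -
  have finF: "finite F" using F finite_subset by blast
  have "card F + card ({0..<n} - F) = n"
    using card_Diff_subset[OF finF F] card_mono[OF _ F] by simp
  thus "length (col_order n F) = n" unfolding col_order_def by simp
  show "distinct (col_order n F)" unfolding col_order_def using finF by auto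
  show "set (col_order n F) = {0..<n}" unfolding col_order_def using finF F by auto
qed

lemma col_order_bij:
  assumes F: "F \<subseteq> {0..<n}"
  shows "bij_betw (\<lambda>j. col_order n F ! j) {..<n} {..<n}"
  using bij_betw_nth[OF col_order_props(2)[OF F]] col_order_props(1,3)[OF F]
  by (simp add: atLeast0LessThan)

lemma col_order_F:
  assumes F: "F \<subseteq> {0..<n}" and j: "j < card F"
  shows "col_order n F ! j \<in> F"
proof -
  have finF: "finite F" using F finite_subset by blast
  have "col_order n F ! j = sorted_list_of_set F ! j" unfolding col_order_def
    using j finF by (simp add: nth_append)
  thus ?thesis using j finF nth_mem[of j "sorted_list_of_set F"] by simp
qed

lemma col_order_notF:
  assumes F: "F \<subseteq> {0..<n}" and j: "card F \<le> j" "j < n"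
  shows "col_order n F ! j \<notin> F"
proof -
  have finF: "finite F" using F finite_subset by blast
  have "card F + card ({0..<n} - F) = n"
    using card_Diff_subset[OF finF F] card_mono[OF _ F] by simp
  hence jl: "j - card F < length (sorted_list_of_set ({0..<n} - F))" using j by simp
  have "col_order n F ! j = sorted_list_of_set ({0..<n} - F) ! (j - card F)" unfolding col_order_def
    using j finF by (simp add: nth_append)
  moreover have "sorted_list_of_set ({0..<n} - F) ! (j - card F) \<in> {0..<n} - F"
    using nth_mem[OF jl] by simp
  ultimately show ?thesis by simp
qed

lemma col_order_surjF:
  assumes F: "F \<subseteq> {0..<n}" and f: "f \<in> F"
  shows "\<exists>j<card F. col_order n F ! j = f"
proof -
  have finF: "finite F" using F finite_subset by blast
  have "f \<in> set (sorted_list_of_set F)" using f finF by simp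
  then obtain j where j: "j < length (sorted_list_of_set F)" "sorted_list_of_set F ! j = f"
    by (metis in_set_conv_nth)
  have "col_order n F ! j = f" unfolding col_order_def using j by (simp add: nth_append)
  thus ?thesis using j finF by auto
qed

lemma rmult_Q:
  fixes N :: "'a::comm_ring_1 aff mat"
  assumes n: "dim_col N = n" and F: "F \<subseteq> {0..<n}"
  shows "rmult N (Q_mat n F) = mat (dim_row N) n (\<lambda>(i,j). N $$ (i, col_order n F ! j))"
proof (rule eq_matI)
  fix i j assume ij: "i < dim_row (mat (dim_row N) n (\<lambda>(i,j). N $$ (i, col_order n F ! j)))"
    "j < dim_col (mat (dim_row N) n (\<lambda>(i,j). N $$ (i, col_order n F ! j)))"
  hence i: "i < dim_row N" and j: "j < n" by auto
  have pj: "col_order n F ! j < n" using bij_betwE[OF col_order_bij[OF F]] j by auto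
  have "rmult N (Q_mat n F) $$ (i,j) = (\<lambda>v. \<Sum>l<n. (N $$ (i,l)) v * (if l = col_order n F ! j then 1 else 0))"
    unfolding rmult_def Q_mat_def using i j n by simp
  also have "\<dots> = (\<lambda>v. \<Sum>l<n. (if l = col_order n F ! j then (N $$ (i,l)) v else 0))"
    by (intro ext sum.cong) auto
  also have "\<dots> = (\<lambda>v. (N $$ (i, col_order n F ! j)) v)"
    using pj by (intro ext) (simp add: sum.delta')
  finally show "rmult N (Q_mat n F) $$ (i,j) = mat (dim_row N) n (\<lambda>(i,j). N $$ (i, col_order n F ! j)) $$ (i,j)"
    using i j by simp
qed (auto simp: rmult_def Q_mat_def)

lemma aff_eval_lin:
  fixes a :: "nat \<Rightarrow> 'a::comm_ring_1"
  shows "aff_eval k (\<lambda>v. \<Sum>l<m. a l * p l v) \<sigma> = (\<Sum>l<m. a l * aff_eval k (p l) \<sigma>)"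
proof -
  have "aff_eval k (\<lambda>v. \<Sum>l<m. a l * p l v) \<sigma> =
        (\<Sum>l<m. a l * p l 0) + (\<Sum>v\<in>{1..k}. \<Sum>l<m. a l * p l v * \<sigma> v)"
    unfolding aff_eval_def by (simp add: sum_distrib_right)
  also have "(\<Sum>v\<in>{1..k}. \<Sum>l<m. a l * p l v * \<sigma> v) = (\<Sum>l<m. \<Sum>v\<in>{1..k}. a l * p l v * \<sigma> v)"
    by (rule sum.swap)
  also have "(\<Sum>l<m. a l * p l 0) + \<dots> = (\<Sum>l<m. a l * p l 0 + (\<Sum>v\<in>{1..k}. a l * p l v * \<sigma> v))"
    by (simp add: sum.distrib)
  also have "\<dots> = (\<Sum>l<m. a l * aff_eval k (p l) \<sigma>)"
    unfolding aff_eval_def by (intro sum.cong refl) (simp add: distrib_left sum_distrib_left mult.assoc)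
  finally show ?thesis .
qed

lemma mult_mat_entry:
  fixes R Y :: "'a::comm_ring_1 mat"
  assumes "R \<in> carrier_mat m m" "Y \<in> carrier_mat m n" "i < m" "j < n"
  shows "(R * Y) $$ (i,j) = (\<Sum>l<m. R $$ (i,l) * Y $$ (l,j))"
  using assms by (auto simp: scalar_prod_def lessThan_atLeast0 intro!: sum.cong)

lemma completion_dims[simp]: "dim_row (completion k N \<sigma>) = dim_row N" "dim_col (completion k N \<sigma>) = dim_col N"
  by (auto simp: completion_def)

lemma completion_index: "i < dim_row N \<Longrightarrow> j < dim_col N \<Longrightarrow> completion k N \<sigma> $$ (i,j) = aff_eval k (N $$ (i,j)) \<sigma>"
  by (simp add: completion_def)

definition Pmat :: "'a::comm_ring_1 mat \<Rightarrow> 'a aff mat \<Rightarrow> nat set \<Rightarrow> 'a aff mat" where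
  "Pmat R M F = rmult (lmult R M) (Q_mat (dim_col M) F)"

lemma Pmat_dims:
  assumes R: "R \<in> carrier_mat m m" and F: "F \<subseteq> {0..<dim_col M}"
  shows "dim_row (Pmat R M F) = m" "dim_col (Pmat R M F) = dim_col M"
proof -
  have Rr: "dim_row R = m" using R by blast
  have "dim_col (lmult R M) = dim_col M" "dim_row (lmult R M) = m" using Rr by (auto simp: lmult_def)
  thus "dim_row (Pmat R M F) = m" "dim_col (Pmat R M F) = dim_col M"
    using rmult_Q[of "lmult R M" "dim_col M" F] F unfolding Pmat_def by auto
qed

lemma Pmat_index:
  assumes R: "R \<in> carrier_mat m m" and F: "F \<subseteq> {0..<dim_col M}" and i: "i < m" and j: "j < dim_col M"
  shows "Pmat R M F $$ (i,j) = (\<lambda>v. \<Sum>l<m. R $$ (i,l) * (M $$ (l, col_order (dim_col M) F ! j)) v)"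
proof -
  have pj: "col_order (dim_col M) F ! j < dim_col M" using bij_betwE[OF col_order_bij[OF F]] j by auto
  have Rr: "dim_row R = m" "dim_col R = m" using R by blast+
  have d: "dim_col (lmult R M) = dim_col M" "dim_row (lmult R M) = m" using Rr by (auto simp: lmult_def)
  have "Pmat R M F $$ (i,j) = lmult R M $$ (i, col_order (dim_col M) F ! j)"
    using rmult_Q[of "lmult R M" "dim_col M" F] F i j d unfolding Pmat_def by auto
  also have "\<dots> = (\<lambda>v. \<Sum>l<m. R $$ (i,l) * (M $$ (l, col_order (dim_col M) F ! j)) v)"
    using Rr i pj by (auto simp: lmult_def)
  finally show ?thesis .
qed

lemma completion_Pmat:
  fixes M :: "'a::comm_ring_1 aff mat"
  assumes R: "R \<in> carrier_mat m m" and F: "F \<subseteq> {0..<dim_col M}" and m: "dim_row M = m"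
  shows "completion k (Pmat R M F) \<sigma> =
     mat m (dim_col M) (\<lambda>(i,j). (R * completion k M \<sigma>) $$ (i, col_order (dim_col M) F ! j))"
proof (rule eq_matI)
  fix i j assume "i < dim_row (mat m (dim_col M) (\<lambda>(i,j). (R * completion k M \<sigma>) $$ (i, col_order (dim_col M) F ! j)))"
    "j < dim_col (mat m (dim_col M) (\<lambda>(i,j). (R * completion k M \<sigma>) $$ (i, col_order (dim_col M) F ! j)))"
  hence i: "i < m" and j: "j < dim_col M" by auto
  have pj: "col_order (dim_col M) F ! j < dim_col M" using bij_betwE[OF col_order_bij[OF F]] j by auto
  have CM: "completion k M \<sigma> \<in> carrier_mat m (dim_col M)"
    by (rule carrier_matI) (simp_all only: completion_dims m)
  have "completion k (Pmat R M F) \<sigma> $$ (i,j) = aff_eval k (Pmat R M F $$ (i,j)) \<sigma>"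
    using completion_index[of i "Pmat R M F" j] Pmat_dims[OF R F] i j by simp
  also have "\<dots> = (\<Sum>l<m. R $$ (i,l) * aff_eval k (M $$ (l, col_order (dim_col M) F ! j)) \<sigma>)"
    unfolding Pmat_index[OF R F i j] by (rule aff_eval_lin)
  also have "\<dots> = (\<Sum>l<m. R $$ (i,l) * completion k M \<sigma> $$ (l, col_order (dim_col M) F ! j))"
  proof (rule sum.cong[OF refl])
    fix l assume "l \<in> {..<m}"
    hence "l < dim_row M" using m by simp
    thus "R $$ (i,l) * aff_eval k (M $$ (l, col_order (dim_col M) F ! j)) \<sigma> =
          R $$ (i,l) * completion k M \<sigma> $$ (l, col_order (dim_col M) F ! j)"
      using completion_index[OF _ pj] by metis
  qed
  also have "\<dots> = (R * completion k M \<sigma>) $$ (i, col_order (dim_col M) F ! j)"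
    using mult_mat_entry[OF R CM i pj] by simp
  finally show "completion k (Pmat R M F) \<sigma> $$ (i,j) =
     mat m (dim_col M) (\<lambda>(i,j). (R * completion k M \<sigma>) $$ (i, col_order (dim_col M) F ! j)) $$ (i,j)"
    using i j by simp
qed (use Pmat_dims[OF R F] in auto)

lemma rank_Pmat:
  fixes M :: "'a::field aff mat"
  assumes R: "R \<in> carrier_mat m m" and inv: "invertible_mat R" and F: "F \<subseteq> {0..<dim_col M}" and m: "dim_row M = m"
  shows "mat_rank (completion k (Pmat R M F) \<sigma>) = mat_rank (completion k M \<sigma>)"
proof -
  have CM: "completion k M \<sigma> \<in> carrier_mat m (dim_col M)"
    by (rule carrier_matI) (simp_all only: completion_dims m)
  have RC: "R * completion k M \<sigma> \<in> carrier_mat m (dim_col M)" using mult_carrier_mat[OF R CM] .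
  show ?thesis
    unfolding completion_Pmat[OF R F m]
    using rank_perm[OF RC col_order_bij[OF F]] rank_mult_left[OF R inv CM] by simp
qed



lemma mr_fin: "finite {mat_rank (completion k (N :: 'a::field aff mat) \<sigma>) | \<sigma>. True}"
proof (rule finite_subset)
  show "{mat_rank (completion k N \<sigma>) | \<sigma>. True} \<subseteq> {..dim_col N}"
  proof
    fix x assume "x \<in> {mat_rank (completion k N \<sigma>) | \<sigma>. True}"
    then obtain \<sigma> where x: "x = mat_rank (completion k N \<sigma>)" by blast
    have "completion k N \<sigma> \<in> carrier_mat (dim_row N) (dim_col N)"
      by (rule carrier_matI) simp_all
    thus "x \<in> {..dim_col N}" using rank_le_nc' x by auto
  qed
qed simp

lemma mr_ge: "mat_rank (completion k (N :: 'a::field aff mat) \<sigma>) \<le> maxRank k N"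
  unfolding maxRank_def using mr_fin by (intro Max_ge) auto

lemma mr_ex: "\<exists>\<sigma>. mat_rank (completion k (N :: 'a::field aff mat) \<sigma>) = maxRank k N"
proof -
  have "maxRank k N \<in> {mat_rank (completion k N \<sigma>) | \<sigma>. True}"
    unfolding maxRank_def using mr_fin by (intro Max_in) auto
  thus ?thesis by auto
qed

lemma mr_le: "(\<And>\<sigma>. mat_rank (completion k (N :: 'a::field aff mat) \<sigma>) \<le> b) \<Longrightarrow> maxRank k N \<le> b"
  using mr_ex by metis

lemma card_le_n: "F \<subseteq> {0..<n} \<Longrightarrow> card F \<le> n"
  using card_mono[of "{0..<n}" F] by simp

lemma triple:
  fixes M :: "'a::field aff mat"
  assumes m: "dim_row M = m" and n: "dim_col M = n" and R: "R \<in> carrier_mat m m" and inv: "invertible_mat R"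
    and F: "F \<subseteq> {0..<n}" and rm: "r \<le> m" and s: "s = card F"
    and z: "zero_lower_left (Pmat R M F) r s"
  shows "mat_rank (completion k M \<sigma>) \<le> mat_rank (completion k (blockA (Pmat R M F) r s) \<sigma>) + (n - s)"
    "mat_rank (completion k M \<sigma>) \<le> (m - r) + mat_rank (completion k (blockC (Pmat R M F) r s) \<sigma>)"
    "mat_rank (completion k (blockA (Pmat R M F) r s) \<sigma>) + mat_rank (completion k (blockC (Pmat R M F) r s) \<sigma>) \<le> mat_rank (completion k M \<sigma>)"
    "mat_rank (completion k (blockA (Pmat R M F) r s) \<sigma>) \<le> m - r"
    "mat_rank (completion k (blockC (Pmat R M F) r s) \<sigma>) \<le> n - s"
proof -
  let ?P = "Pmat R M F"
  have F': "F \<subseteq> {0..<dim_col M}" using F n by simp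
  have Pd: "dim_row ?P = m" "dim_col ?P = n" using Pmat_dims[OF R F'] n by auto
  have sn: "s \<le> n" using card_le_n[OF F] s by simp
  define X where "X = completion k ?P \<sigma>"
  have X: "X \<in> carrier_mat m n" unfolding X_def by (rule carrier_matI) (simp_all only: completion_dims Pd)
  have rkX: "mat_rank X = mat_rank (completion k M \<sigma>)" unfolding X_def using rank_Pmat[OF R inv F' m] .
  have Xi: "X $$ (i,j) = aff_eval k (?P $$ (i,j)) \<sigma>" if "i < m" "j < n" for i j
    unfolding X_def using completion_index[of i ?P j k \<sigma>] that Pd by simp
  have zero: "X $$ (m-r+i, j) = 0" if "i < r" "j < s" for i j
  proof -
    have "?P $$ (m-r+i, j) = (\<lambda>v. 0)" using z that Pd unfolding zero_lower_left_def by simp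
    moreover have "m - r + i < m" "j < n" using that rm sn by auto
    ultimately show ?thesis using Xi by (simp add: aff_eval_def)
  qed
  have A: "completion k (blockA ?P r s) \<sigma> = mat (m-r) s (\<lambda>(i,j). X $$ (i,j))"
  proof (rule eq_matI)
    fix i j assume ij: "i < dim_row (mat (m-r) s (\<lambda>(i,j). X $$ (i,j)))" "j < dim_col (mat (m-r) s (\<lambda>(i,j). X $$ (i,j)))"
    hence i: "i < m - r" and j: "j < s" by auto
    have "completion k (blockA ?P r s) \<sigma> $$ (i,j) = aff_eval k (blockA ?P r s $$ (i,j)) \<sigma>"
      using i j Pd by (intro completion_index) (auto simp: blockA_def)
    also have "\<dots> = aff_eval k (?P $$ (i,j)) \<sigma>" using i j Pd by (simp add: blockA_def)
    also have "\<dots> = X $$ (i,j)" using Xi[of i j] i j sn by simp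
    finally show "completion k (blockA ?P r s) \<sigma> $$ (i,j) = mat (m-r) s (\<lambda>(i,j). X $$ (i,j)) $$ (i,j)"
      using i j by simp
  qed (use Pd in \<open>auto simp: blockA_def\<close>)
  have C: "completion k (blockC ?P r s) \<sigma> = mat r (n-s) (\<lambda>(i,j). X $$ (m-r+i, s+j))"
  proof (rule eq_matI)
    fix i j assume ij: "i < dim_row (mat r (n-s) (\<lambda>(i,j). X $$ (m-r+i, s+j)))" "j < dim_col (mat r (n-s) (\<lambda>(i,j). X $$ (m-r+i, s+j)))"
    hence i: "i < r" and j: "j < n - s" by auto
    have "completion k (blockC ?P r s) \<sigma> $$ (i,j) = aff_eval k (blockC ?P r s $$ (i,j)) \<sigma>"
      using i j Pd by (intro completion_index) (auto simp: blockC_def)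
    also have "\<dots> = aff_eval k (?P $$ (m-r+i, s+j)) \<sigma>" using i j Pd by (simp add: blockC_def)
    also have "\<dots> = X $$ (m-r+i, s+j)" using Xi[of "m-r+i" "s+j"] i j sn rm by simp
    finally show "completion k (blockC ?P r s) \<sigma> $$ (i,j) = mat r (n-s) (\<lambda>(i,j). X $$ (m-r+i, s+j)) $$ (i,j)"
      using i j by simp
  qed (use Pd in \<open>auto simp: blockC_def\<close>)
  show "mat_rank (completion k M \<sigma>) \<le> mat_rank (completion k (blockA ?P r s) \<sigma>) + (n - s)"
    using blk_a[OF X rm sn zero] rkX A by simp
  show "mat_rank (completion k M \<sigma>) \<le> (m - r) + mat_rank (completion k (blockC ?P r s) \<sigma>)"
    using blk_b[OF X rm sn zero] rkX C by simp
  show "mat_rank (completion k (blockA ?P r s) \<sigma>) + mat_rank (completion k (blockC ?P r s) \<sigma>) \<le> mat_rank (completion k M \<sigma>)"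
    using blk_c[OF X rm sn zero] rkX A C by simp
  have Ac: "mat (m-r) s (\<lambda>(i,j). X $$ (i,j)) \<in> carrier_mat (m-r) s" by simp
  show "mat_rank (completion k (blockA ?P r s) \<sigma>) \<le> m - r" using rank_le_nr[OF Ac] A by simp
  have Cc: "mat r (n-s) (\<lambda>(i,j). X $$ (m-r+i, s+j)) \<in> carrier_mat r (n-s)" by simp
  show "mat_rank (completion k (blockC ?P r s) \<sigma>) \<le> n - s" using rank_le_nc'[OF Cc] C by simp
qed



lemma aci_split:
  fixes M :: "'a::field aff mat" and F :: "nat set" and \<sigma>1 \<sigma>2 :: "nat \<Rightarrow> 'a"
  assumes aci: "aci_matrix k M" and l: "l < dim_row M" and c: "c < dim_col M"
  defines "S \<equiv> {v. \<exists>i<dim_row M. \<exists>j\<in>F. j < dim_col M \<and> (M $$ (i,j)) v \<noteq> 0}"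
  shows "c \<in> F \<Longrightarrow> aff_eval k (M $$ (l,c)) (\<lambda>v. if v \<in> S then \<sigma>1 v else \<sigma>2 v) = aff_eval k (M $$ (l,c)) \<sigma>1"
    and "c \<notin> F \<Longrightarrow> aff_eval k (M $$ (l,c)) (\<lambda>v. if v \<in> S then \<sigma>1 v else \<sigma>2 v) = aff_eval k (M $$ (l,c)) \<sigma>2"
proof -
  assume cF: "c \<in> F"
  show "aff_eval k (M $$ (l,c)) (\<lambda>v. if v \<in> S then \<sigma>1 v else \<sigma>2 v) = aff_eval k (M $$ (l,c)) \<sigma>1"
    unfolding aff_eval_def
  proof (intro arg_cong2[where f="(+)"] refl sum.cong)
    fix v assume "v \<in> {1..k}"
    show "(M $$ (l,c)) v * (if v \<in> S then \<sigma>1 v else \<sigma>2 v) = (M $$ (l,c)) v * \<sigma>1 v"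
    proof (cases "(M $$ (l,c)) v = 0")
      case False
      hence "v \<in> S" unfolding S_def using l c cF by blast
      thus ?thesis by simp
    qed simp
  qed
next
  assume cF: "c \<notin> F"
  show "aff_eval k (M $$ (l,c)) (\<lambda>v. if v \<in> S then \<sigma>1 v else \<sigma>2 v) = aff_eval k (M $$ (l,c)) \<sigma>2"
    unfolding aff_eval_def
  proof (intro arg_cong2[where f="(+)"] refl sum.cong)
    fix v assume v: "v \<in> {1..k}"
    show "(M $$ (l,c)) v * (if v \<in> S then \<sigma>1 v else \<sigma>2 v) = (M $$ (l,c)) v * \<sigma>2 v"
    proof (cases "(M $$ (l,c)) v = 0")
      case False
      have "v \<notin> S"
      proof
        assume "v \<in> S"
        then obtain i j where ij: "i < dim_row M" "j \<in> F" "j < dim_col M" "(M $$ (i,j)) v \<noteq> 0"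
          unfolding S_def by blast
        have "c = j" using aci v l c ij False unfolding aci_matrix_def by blast
        thus False using cF ij by simp
      qed
      thus ?thesis by simp
    qed simp
  qed
qed


lemma Pmat_eval:
  fixes M :: "'a::field aff mat"
  assumes R: "R \<in> carrier_mat m m" and F: "F \<subseteq> {0..<dim_col M}" and i: "i < m" and j: "j < dim_col M"
  shows "aff_eval k (Pmat R M F $$ (i,j)) \<sigma> = (\<Sum>l<m. R $$ (i,l) * aff_eval k (M $$ (l, col_order (dim_col M) F ! j)) \<sigma>)"
  unfolding Pmat_index[OF R F i j] by (rule aff_eval_lin)

lemma combine:
  fixes M :: "'a::field aff mat"
  assumes aci: "aci_matrix k M" and m: "dim_row M = m" and n: "dim_col M = n"
    and R: "R \<in> carrier_mat m m" and F: "F \<subseteq> {0..<n}" and s: "s = card F" and rm: "r \<le> m"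
  shows "\<exists>\<sigma>. completion k (blockA (Pmat R M F) r s) \<sigma> = completion k (blockA (Pmat R M F) r s) \<sigma>1
           \<and> completion k (blockC (Pmat R M F) r s) \<sigma> = completion k (blockC (Pmat R M F) r s) \<sigma>2"
proof -
  let ?P = "Pmat R M F"
  have F': "F \<subseteq> {0..<dim_col M}" using F n by simp
  have Pd: "dim_row ?P = m" "dim_col ?P = n" using Pmat_dims[OF R F'] n by auto
  have sn: "s \<le> n" using card_le_n[OF F] s by simp
  define S where "S = {v. \<exists>i<dim_row M. \<exists>j\<in>F. j < dim_col M \<and> (M $$ (i,j)) v \<noteq> 0}"
  define \<sigma> where "\<sigma> = (\<lambda>v. if v \<in> S then \<sigma>1 v else \<sigma>2 v)"
  have e1: "aff_eval k (?P $$ (i,j)) \<sigma> = aff_eval k (?P $$ (i,j)) \<sigma>1" if "i < m" "j < s" for i j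
  proof -
    have jn: "j < n" using that sn by simp
    have pj: "col_order n F ! j \<in> F" using col_order_F[OF F] that s by simp
    have pjn: "col_order n F ! j < n" using pj F by auto
    have pjn': "col_order n F ! j < dim_col M" using pjn n by simp
    have key: "aff_eval k (M $$ (l, col_order n F ! j)) \<sigma> = aff_eval k (M $$ (l, col_order n F ! j)) \<sigma>1"
      if "l < dim_row M" for l
      using aci_split(1)[OF aci that pjn' pj, of \<sigma>1 \<sigma>2] unfolding \<sigma>_def S_def .
    have jn': "j < dim_col M" using jn n by simp
    show ?thesis unfolding Pmat_eval[OF R F' that(1) jn'] n
      using key m by (intro sum.cong refl) auto
  qed
  have e2: "aff_eval k (?P $$ (i,j)) \<sigma> = aff_eval k (?P $$ (i,j)) \<sigma>2" if "i < m" "s \<le> j" "j < n" for i j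
  proof -
    have pj: "col_order n F ! j \<notin> F" using col_order_notF[OF F] that s by simp
    have pjn: "col_order n F ! j < n" using bij_betwE[OF col_order_bij[OF F]] that by auto
    have pjn': "col_order n F ! j < dim_col M" using pjn n by simp
    have key: "aff_eval k (M $$ (l, col_order n F ! j)) \<sigma> = aff_eval k (M $$ (l, col_order n F ! j)) \<sigma>2"
      if "l < dim_row M" for l
      using aci_split(2)[OF aci that pjn' pj, of \<sigma>1 \<sigma>2] unfolding \<sigma>_def S_def .
    have jn': "j < dim_col M" using that n by simp
    show ?thesis unfolding Pmat_eval[OF R F' that(1) jn'] n
      using key m by (intro sum.cong refl) auto
  qed
  have "completion k (blockA ?P r s) \<sigma> = completion k (blockA ?P r s) \<sigma>1"
  proof (rule eq_matI)
    fix i j assume "i < dim_row (completion k (blockA ?P r s) \<sigma>1)" "j < dim_col (completion k (blockA ?P r s) \<sigma>1)"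
    hence i: "i < m - r" and j: "j < s" using Pd by (auto simp: blockA_def)
    have im: "i < m" using i by simp
    show "completion k (blockA ?P r s) \<sigma> $$ (i,j) = completion k (blockA ?P r s) \<sigma>1 $$ (i,j)"
      using i j Pd e1[OF im j] by (simp add: completion_def blockA_def)
  qed (simp_all)
  moreover have "completion k (blockC ?P r s) \<sigma> = completion k (blockC ?P r s) \<sigma>2"
  proof (rule eq_matI)
    fix i j assume "i < dim_row (completion k (blockC ?P r s) \<sigma>2)" "j < dim_col (completion k (blockC ?P r s) \<sigma>2)"
    hence i: "i < r" and j: "j < n - s" using Pd by (auto simp: blockC_def)
    have im: "m - r + i < m" using i rm by simp
    have js: "s \<le> s + j" "s + j < n" using j sn by auto
    show "completion k (blockC ?P r s) \<sigma> $$ (i,j) = completion k (blockC ?P r s) \<sigma>2 $$ (i,j)"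
      using i j Pd e2[OF im js] by (simp add: completion_def blockC_def)
  qed (simp_all)
  ultimately show ?thesis by blast
qed

lemma factor_rank:
  fixes M :: "'a::field aff mat"
  assumes aci: "aci_matrix k M" and m: "dim_row M = m" and n: "dim_col M = n"
    and R: "R \<in> carrier_mat m m" and inv: "invertible_mat R" and F: "F \<subseteq> {0..<n}" and Fne: "F \<noteq> {}"
    and s: "s = card F" and rm: "r \<le> m" and z: "zero_lower_left (Pmat R M F) r s"
    and big: "n \<le> r + s"
    and fr: "FRmR k (blockA (Pmat R M F) r s)" and fc: "FCmR k (blockC (Pmat R M F) r s)"
  shows "maxRank k M = (m - r) + (n - s)"
proof -
  let ?P = "Pmat R M F"
  have F': "F \<subseteq> {0..<dim_col M}" using F n by simp
  have Pd: "dim_row ?P = m" "dim_col ?P = n" using Pmat_dims[OF R F'] n by auto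
  have finF: "finite F" using F finite_subset by blast
  have s0: "s > 0" using Fne finF s by (simp add: card_gt_0_iff)
  have sn: "s \<le> n" using card_le_n[OF F] s by simp
  note T = triple[OF m n R inv F rm s z]
  have le: "maxRank k M \<le> (m - r) + (n - s)"
  proof (rule mr_le)
    fix \<sigma> show "mat_rank (completion k M \<sigma>) \<le> m - r + (n - s)" using T(1)[where k=k and \<sigma>=\<sigma>] T(4)[where k=k and \<sigma>=\<sigma>] by linarith
  qed
  have "maxRank k (blockA ?P r s) = m - r"
    using fr s0 Pd unfolding FRmR_def by (auto simp: blockA_def)
  then obtain \<sigma>1 where s1: "mat_rank (completion k (blockA ?P r s) \<sigma>1) = m - r" using mr_ex by metis
  obtain \<sigma>2 where s2: "n - s \<le> mat_rank (completion k (blockC ?P r s) \<sigma>2)"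
  proof (cases "r = 0")
    case True
    hence "n - s = 0" using big by simp
    thus ?thesis using that by simp
  next
    case False
    hence "maxRank k (blockC ?P r s) = n - s"
      using fc Pd unfolding FCmR_def by (auto simp: blockC_def)
    thus ?thesis using that mr_ex by (metis order_refl)
  qed
  obtain \<sigma> where sg: "completion k (blockA ?P r s) \<sigma> = completion k (blockA ?P r s) \<sigma>1"
      "completion k (blockC ?P r s) \<sigma> = completion k (blockC ?P r s) \<sigma>2"
    using combine[OF aci m n R F s rm] by blast
  have "(m - r) + (n - s) \<le> mat_rank (completion k M \<sigma>)" using T(3)[where k=k and \<sigma>=\<sigma>] sg s1 s2 by simp
  also have "\<dots> \<le> maxRank k M" by (rule mr_ge)
  finally show ?thesis using le by simp
qed

lemma upper_rank:
  fixes M :: "'a::field aff mat"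
  assumes m: "dim_row M = m" and n: "dim_col M = n"
    and R: "R \<in> carrier_mat m m" and inv: "invertible_mat R" and F: "F \<subseteq> {0..<n}"
    and s: "s = card F" and rm: "r \<le> m" and z: "zero_lower_left (Pmat R M F) r s"
  shows "maxRank k M \<le> (m - r) + (n - s)"
proof (rule mr_le)
  note T = triple[OF m n R inv F rm s z]
  fix \<sigma> show "mat_rank (completion k M \<sigma>) \<le> m - r + (n - s)" using T(1)[where k=k and \<sigma>=\<sigma>] T(4)[where k=k and \<sigma>=\<sigma>] by linarith
qed

lemma converse_fl:
  fixes M :: "'a::field aff mat"
  assumes m: "dim_row M = m" and n: "dim_col M = n"
    and R: "R \<in> carrier_mat m m" and inv: "invertible_mat R" and F: "F \<subseteq> {0..<n}"
    and s: "s = card F" and rm: "r \<le> m" and z: "zero_lower_left (Pmat R M F) r s"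
    and ge: "(m - r) + (n - s) \<le> maxRank k M"
  shows "FRmR k (blockA (Pmat R M F) r s) \<and> FCmR k (blockC (Pmat R M F) r s)"
proof -
  let ?P = "Pmat R M F"
  have F': "F \<subseteq> {0..<dim_col M}" using F n by simp
  have Pd: "dim_row ?P = m" "dim_col ?P = n" using Pmat_dims[OF R F'] n by auto
  note T = triple[OF m n R inv F rm s z]
  obtain \<sigma>0 where s0: "mat_rank (completion k M \<sigma>0) = maxRank k M" using mr_ex by metis
  have "m - r \<le> mat_rank (completion k (blockA ?P r s) \<sigma>0)" using T(1)[where k=k and \<sigma>=\<sigma>0] s0 ge by linarith
  also have "\<dots> \<le> maxRank k (blockA ?P r s)" by (rule mr_ge)
  finally have a1: "m - r \<le> maxRank k (blockA ?P r s)" .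
  have a2: "maxRank k (blockA ?P r s) \<le> m - r" using T(4) by (intro mr_le) blast
  have "n - s \<le> mat_rank (completion k (blockC ?P r s) \<sigma>0)" using T(2)[where k=k and \<sigma>=\<sigma>0] s0 ge by linarith
  also have "\<dots> \<le> maxRank k (blockC ?P r s)" by (rule mr_ge)
  finally have c1: "n - s \<le> maxRank k (blockC ?P r s)" .
  have c2: "maxRank k (blockC ?P r s) \<le> n - s" using T(5) by (intro mr_le) blast
  show ?thesis using a1 a2 c1 c2 Pd unfolding FRmR_def FCmR_def by (auto simp: blockA_def blockC_def)
qed



definition ann :: "'a::comm_ring_1 aff mat \<Rightarrow> nat set \<Rightarrow> (nat \<Rightarrow> 'a) \<Rightarrow> bool" where
  "ann M F w \<longleftrightarrow> (\<forall>j\<in>F. \<forall>v. (\<Sum>l<dim_row M. w l * (M $$ (l,j)) v) = 0)"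

lemma ann_mono: "ann M F w \<Longrightarrow> G \<subseteq> F \<Longrightarrow> ann M G w"
  unfolding ann_def by blast

lemma ann_Un: "ann M F w \<Longrightarrow> ann M G w \<Longrightarrow> ann M (F \<union> G) w"
  unfolding ann_def by blast

lemma ann_comb:
  fixes Z D :: "'a::comm_ring_1 mat"
  assumes Z: "Z \<in> carrier_mat m N" and D: "D \<in> carrier_mat N p" and q: "q < p" and mM: "dim_row M = m"
    and h: "\<And>t. t < N \<Longrightarrow> D $$ (t,q) \<noteq> 0 \<Longrightarrow> ann M F (\<lambda>l. Z $$ (l,t))"
  shows "ann M F (\<lambda>l. (Z * D) $$ (l,q))"
  unfolding ann_def
proof (intro ballI allI)
  fix j v assume j: "j \<in> F"
  have "(\<Sum>l<dim_row M. (Z * D) $$ (l,q) * (M $$ (l,j)) v) = (\<Sum>l<m. (\<Sum>t<N. Z $$ (l,t) * D $$ (t,q)) * (M $$ (l,j)) v)"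
  proof (rule sum.cong)
    show "{..<dim_row M} = {..<m}" using mM by simp
  next
    fix l assume "l \<in> {..<m}"
    hence l: "l < m" by simp
    have "(Z * D) $$ (l,q) = row Z l \<bullet> col D q" using Z D l q by simp
    also have "\<dots> = (\<Sum>t<N. Z $$ (l,t) * D $$ (t,q))"
      using Z D l q by (auto simp: scalar_prod_def lessThan_atLeast0 intro!: sum.cong)
    finally show "(Z * D) $$ (l,q) * (M $$ (l,j)) v = (\<Sum>t<N. Z $$ (l,t) * D $$ (t,q)) * (M $$ (l,j)) v" by simp
  qed
  also have "\<dots> = (\<Sum>l<m. \<Sum>t<N. D $$ (t,q) * (Z $$ (l,t) * (M $$ (l,j)) v))"
    by (intro sum.cong refl) (simp add: sum_distrib_right sum_distrib_left mult_ac)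
  also have "\<dots> = (\<Sum>t<N. D $$ (t,q) * (\<Sum>l<m. Z $$ (l,t) * (M $$ (l,j)) v))"
    by (subst sum.swap) (simp add: sum_distrib_left)
  also have "\<dots> = 0"
  proof (rule sum.neutral, rule ballI)
    fix t assume "t \<in> {..<N}"
    show "D $$ (t,q) * (\<Sum>l<m. Z $$ (l,t) * (M $$ (l,j)) v) = 0"
    proof (cases "D $$ (t,q) = 0")
      case False
      hence "ann M F (\<lambda>l. Z $$ (l,t))" using h \<open>t \<in> {..<N}\<close> by simp
      hence "(\<Sum>l<dim_row M. Z $$ (l,t) * (M $$ (l,j)) v) = 0" using j unfolding ann_def by blast
      thus ?thesis using mM by simp
    qed simp
  qed
  finally show "(\<Sum>l<dim_row M. (Z * D) $$ (l,q) * (M $$ (l,j)) v) = 0" .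
qed

lemma zll_iff:
  fixes M :: "'a::field aff mat"
  assumes R: "R \<in> carrier_mat m m" and m: "dim_row M = m" and F: "F \<subseteq> {0..<dim_col M}" and rm: "r \<le> m"
  shows "zero_lower_left (Pmat R M F) r (card F) \<longleftrightarrow> (\<forall>t<r. ann M F (\<lambda>l. R $$ (m-r+t, l)))"
proof -
  let ?n = "dim_col M"
  have Pd: "dim_row (Pmat R M F) = m" using Pmat_dims[OF R F] by simp
  have sn: "card F \<le> ?n" using card_le_n[OF F] .
  have P: "Pmat R M F $$ (m-r+t, j) = (\<lambda>v. \<Sum>l<m. R $$ (m-r+t,l) * (M $$ (l, col_order ?n F ! j)) v)"
    if "t < r" "j < card F" for t j
    using Pmat_index[OF R F, of "m-r+t" j] that rm sn by simp
  show ?thesis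
  proof
    assume z: "zero_lower_left (Pmat R M F) r (card F)"
    show "\<forall>t<r. ann M F (\<lambda>l. R $$ (m-r+t, l))"
    proof (intro allI impI)
      fix t assume t: "t < r"
      show "ann M F (\<lambda>l. R $$ (m-r+t, l))" unfolding ann_def
      proof (intro ballI allI)
        fix f v assume f: "f \<in> F"
        obtain j where j: "j < card F" "col_order ?n F ! j = f" using col_order_surjF[OF F f] by blast
        have "Pmat R M F $$ (m-r+t, j) = (\<lambda>v. 0)" using z t j Pd unfolding zero_lower_left_def by simp
        hence "(\<Sum>l<m. R $$ (m-r+t,l) * (M $$ (l, f)) v) = 0" using P[OF t j(1)] j(2) by metis
        thus "(\<Sum>l<dim_row M. R $$ (m-r+t,l) * (M $$ (l, f)) v) = 0" using m by simp
      qed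
    qed
  next
    assume a: "\<forall>t<r. ann M F (\<lambda>l. R $$ (m-r+t, l))"
    show "zero_lower_left (Pmat R M F) r (card F)" unfolding zero_lower_left_def Pd
    proof (intro allI impI)
      fix t j assume t: "t < r" and j: "j < card F"
      have f: "col_order ?n F ! j \<in> F" using col_order_F[OF F j] .
      have "\<forall>v. (\<Sum>l<dim_row M. R $$ (m-r+t,l) * (M $$ (l, col_order ?n F ! j)) v) = 0"
        using a t f unfolding ann_def by blast
      thus "Pmat R M F $$ (m-r+t, j) = (\<lambda>v. 0)" unfolding P[OF t j] using m by auto
    qed
  qed
qed

lemma invertible_from_ind:
  fixes W :: "'a::field mat"
  assumes W: "W \<in> carrier_mat m m" and i: "ind W {..<m}"
  shows "invertible_mat (transpose_mat W)"
proof -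
  have "m \<le> mat_rank W" using B1[OF W i] by simp
  hence "mat_rank W = m" using rank_le_nc'[OF W] by simp
  hence "det W \<noteq> 0" using vec_space.det_rank_iff[OF W] W unfolding mat_rank_def by simp
  hence d: "det (transpose_mat W) \<noteq> 0" using det_transpose[OF W] by simp
  have WT: "transpose_mat W \<in> carrier_mat m m" using W by simp
  from det_non_zero_imp_unit[OF WT d, unfolded Units_def, of "()"]
  obtain B where B: "B \<in> carrier_mat m m" "B * transpose_mat W = 1\<^sub>m m" "transpose_mat W * B = 1\<^sub>m m"
    by (auto simp: ring_mat_def)
  show ?thesis unfolding invertible_mat_def inverts_mat_def square_mat.simps
    using B WT by (metis carrier_matD(1) carrier_matD(2))
qed

lemma invertible_transpose_cancel:
  fixes R :: "'a::field mat"
  assumes R: "R \<in> carrier_mat m m" and inv: "invertible_mat R" and c: "c \<in> carrier_vec m"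
    and z: "transpose_mat R *\<^sub>v c = 0\<^sub>v m"
  shows "c = 0\<^sub>v m"
proof -
  obtain B where B: "R * B = 1\<^sub>m m" "B * R = 1\<^sub>m (dim_row B)"
    using inv R unfolding invertible_mat_def inverts_mat_def by auto
  have "dim_row B = m" using B(2) R by (metis carrier_matD(2) index_mult_mat(3) index_one_mat(3))
  hence B': "B \<in> carrier_mat m m" using B(1) R by (metis carrier_matI index_mult_mat(3) index_one_mat(3))
  have "transpose_mat B * transpose_mat R = transpose_mat (R * B)" using transpose_mult[OF R B'] by simp
  also have "\<dots> = 1\<^sub>m m" using B(1) by simp
  finally have BR: "transpose_mat B * transpose_mat R = 1\<^sub>m m" .
  have BT: "transpose_mat B \<in> carrier_mat m m" using B' by simp
  have RT: "transpose_mat R \<in> carrier_mat m m" using R by simp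
  have "c = (transpose_mat B * transpose_mat R) *\<^sub>v c" using BR c by simp
  also have "\<dots> = transpose_mat B *\<^sub>v (transpose_mat R *\<^sub>v c)" using assoc_mult_mat_vec[OF BT RT c] .
  also have "\<dots> = 0\<^sub>v m" using z mult_mat_vec_zero[OF BT] by simp
  finally show ?thesis .
qed



lemma no_span:
  fixes W :: "'a::field mat"
  assumes W: "W \<in> carrier_mat m r" and rm: "r < m"
  shows "\<exists>l0<m. \<not> (\<exists>c\<in>carrier_vec r. W *\<^sub>v c = unit_vec m l0)"
proof (rule ccontr)
  assume "\<not> ?thesis"
  hence "\<forall>l<m. \<exists>c\<in>carrier_vec r. W *\<^sub>v c = unit_vec m l" by blast
  then obtain cf where cf: "\<And>l. l < m \<Longrightarrow> cf l \<in> carrier_vec r \<and> W *\<^sub>v cf l = unit_vec m l" by metis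
  define X where "X = mat r m (\<lambda>(t,l). cf l $ t)"
  have X: "X \<in> carrier_mat r m" unfolding X_def by simp
  have WX: "W * X = 1\<^sub>m m"
  proof (rule eq_matI)
    fix i l assume "i < dim_row (1\<^sub>m m :: 'a mat)" "l < dim_col (1\<^sub>m m :: 'a mat)"
    hence i: "i < m" and l: "l < m" by auto
    have "(W * X) $$ (i,l) = (\<Sum>t<r. W $$ (i,t) * X $$ (t,l))"
      using W X i l by (auto simp: scalar_prod_def lessThan_atLeast0 intro!: sum.cong)
    also have "\<dots> = (\<Sum>t<r. W $$ (i,t) * cf l $ t)" using l by (intro sum.cong) (auto simp: X_def)
    also have "\<dots> = (W *\<^sub>v cf l) $ i" using mult_mat_vec_sum[OF W conjunct1[OF cf[OF l]] i] by simp
    also have "\<dots> = unit_vec m l $ i" using cf[OF l] by simp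
    finally show "(W * X) $$ (i,l) = 1\<^sub>m m $$ (i,l)" using i l by simp
  qed (use W X in auto)
  have "ind X {..<m}" unfolding ind_def
  proof (intro conjI ballI impI)
    show "{..<m} \<subseteq> {..<dim_col X}" using X by simp
    fix c :: "'a vec" assume c: "c \<in> carrier_vec (dim_col X)" and z: "X *\<^sub>v c = 0\<^sub>v (dim_row X)"
    have cm: "c \<in> carrier_vec m" using c X by simp
    have "c = (W * X) *\<^sub>v c" using WX cm by simp
    also have "\<dots> = W *\<^sub>v (X *\<^sub>v c)" using assoc_mult_mat_vec[OF W X cm] .
    also have "\<dots> = 0\<^sub>v m" using z X mult_mat_vec_zero[OF W] by simp
    finally show "c = 0\<^sub>v (dim_col X)" using X by simp
  qed
  hence "card {..<m} \<le> r" using ind_card_le_nr[OF X] by blast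
  thus False using rm by simp
qed

lemma extend_step:
  fixes W :: "'a::field mat"
  assumes W: "W \<in> carrier_mat m r" and i: "ind W {..<r}" and l0: "l0 < m"
    and ns: "\<not> (\<exists>c\<in>carrier_vec r. W *\<^sub>v c = unit_vec m l0)"
  shows "ind (mat m (Suc r) (\<lambda>(l,t). if t = 0 then (if l = l0 then 1 else 0) else W $$ (l,t-1))) {..<Suc r}"
proof -
  let ?W = "mat m (Suc r) (\<lambda>(l,t). if t = 0 then (if l = l0 then 1 else 0) else W $$ (l,t-1))"
  have W': "?W \<in> carrier_mat m (Suc r)" by simp
  show ?thesis unfolding ind_def
  proof (intro conjI ballI impI)
    show "{..<Suc r} \<subseteq> {..<dim_col ?W}" by simp
    fix c :: "'a vec" assume c: "c \<in> carrier_vec (dim_col ?W)" and z: "?W *\<^sub>v c = 0\<^sub>v (dim_row ?W)"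
    have cc: "c \<in> carrier_vec (Suc r)" using c by simp
    define c' where "c' = vec r (\<lambda>t. c $ Suc t)"
    have c'c: "c' \<in> carrier_vec r" unfolding c'_def by simp
    have ent: "(if i = l0 then c $ 0 else 0) + (W *\<^sub>v c') $ i = 0" if im: "i < m" for i
    proof -
      have "0 = (?W *\<^sub>v c) $ i" using z im by simp
      also have "\<dots> = (\<Sum>t<Suc r. ?W $$ (i,t) * c $ t)" using mult_mat_vec_sum[OF W' cc im] .
      also have "\<dots> = ?W $$ (i,0) * c $ 0 + (\<Sum>t<r. ?W $$ (i,Suc t) * c $ Suc t)"
        by (rule sum.lessThan_Suc_shift)
      also have "(\<Sum>t<r. ?W $$ (i,Suc t) * c $ Suc t) = (\<Sum>t<r. W $$ (i,t) * c' $ t)"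
        using im by (intro sum.cong) (auto simp: c'_def)
      also have "\<dots> = (W *\<^sub>v c') $ i" using mult_mat_vec_sum[OF W c'c im] by simp
      also have "?W $$ (i,0) * c $ 0 = (if i = l0 then c $ 0 else 0)" using im by simp
      finally show ?thesis by simp
    qed
    have c0: "c $ 0 = 0"
    proof (rule ccontr)
      assume nz: "c $ 0 \<noteq> 0"
      define w where "w = vec r (\<lambda>t. - c' $ t / c $ 0)"
      have wc: "w \<in> carrier_vec r" unfolding w_def by simp
      have "W *\<^sub>v w = unit_vec m l0"
      proof (rule eq_vecI)
        fix i assume "i < dim_vec (unit_vec m l0 :: 'a vec)"
        hence im: "i < m" by simp
        have "(W *\<^sub>v w) $ i = (\<Sum>t<r. W $$ (i,t) * (- c' $ t / c $ 0))"
          using mult_mat_vec_sum[OF W wc im] by (simp add: w_def)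
        also have "\<dots> = - (\<Sum>t<r. W $$ (i,t) * c' $ t) / c $ 0"
          by (simp add: sum_divide_distrib sum_negf)
        also have "(\<Sum>t<r. W $$ (i,t) * c' $ t) = (W *\<^sub>v c') $ i" using mult_mat_vec_sum[OF W c'c im] by simp
        also have "\<dots> = - (if i = l0 then c $ 0 else 0)" using ent[OF im] by (simp add: eq_neg_iff_add_eq_0 add.commute)
        finally show "(W *\<^sub>v w) $ i = unit_vec m l0 $ i" using im l0 nz by simp
      qed (use W in simp)
      thus False using ns wc by blast
    qed
    have "W *\<^sub>v c' = 0\<^sub>v m"
    proof (rule eq_vecI)
      fix i assume "i < dim_vec (0\<^sub>v m :: 'a vec)"
      hence im: "i < m" by simp
      show "(W *\<^sub>v c') $ i = 0\<^sub>v m $ i" using ent[OF im] c0 im by (cases "i = l0") simp_all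
    qed (use W in simp)
    hence "c' = 0\<^sub>v r" using i W c'c unfolding ind_def by auto
    show "c = 0\<^sub>v (dim_col ?W)"
    proof (rule eq_vecI)
      fix t assume "t < dim_vec (0\<^sub>v (dim_col ?W) :: 'a vec)"
      hence t: "t < Suc r" by simp
      show "c $ t = 0\<^sub>v (dim_col ?W) $ t"
      proof (cases t)
        case 0 thus ?thesis using c0 by simp
      next
        case (Suc t')
        hence "c $ t = c' $ t'" "t' < r" using t by (auto simp: c'_def)
        thus ?thesis using \<open>c' = 0\<^sub>v r\<close> t by simp
      qed
    qed (use cc in simp)
  qed
qed

lemma extend_aux:
  fixes W :: "'a::field mat"
  shows "W \<in> carrier_mat m r \<Longrightarrow> ind W {..<r} \<Longrightarrow> m - r = d \<Longrightarrow>
    \<exists>R. R \<in> carrier_mat m m \<and> invertible_mat R \<and> (\<forall>t<r. \<forall>l<m. R $$ (m-r+t, l) = W $$ (l,t))"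
proof (induction d arbitrary: r W)
  case 0
  have "r \<le> m" using ind_card_le_nr[OF 0(1,2)] by simp
  hence r: "r = m" using 0(3) by simp
  have Wm: "W \<in> carrier_mat m m" using 0(1) r by simp
  have "invertible_mat (transpose_mat W)" using invertible_from_ind[OF Wm] 0(2) r by simp
  moreover have "transpose_mat W \<in> carrier_mat m m" using Wm by simp
  moreover have "\<forall>t<r. \<forall>l<m. transpose_mat W $$ (m-r+t, l) = W $$ (l,t)" using Wm r by auto
  ultimately show ?case by blast
next
  case (Suc d)
  have rm: "r < m" using Suc(4) by simp
  obtain l0 where l0: "l0 < m" "\<not> (\<exists>c\<in>carrier_vec r. W *\<^sub>v c = unit_vec m l0)"
    using no_span[OF Suc(2) rm] by blast
  let ?W = "mat m (Suc r) (\<lambda>(l,t). if t = 0 then (if l = l0 then 1 else 0) else W $$ (l,t-1))"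
  have i': "ind ?W {..<Suc r}" using extend_step[OF Suc(2,3) l0] .
  have W': "?W \<in> carrier_mat m (Suc r)" by simp
  have md: "m - Suc r = d" using Suc(4) by simp
  from Suc.IH[OF W' i' md] obtain R where R: "R \<in> carrier_mat m m" "invertible_mat R"
    "\<forall>t<Suc r. \<forall>l<m. R $$ (m - Suc r + t, l) = ?W $$ (l,t)"
    by blast
  have "\<forall>t<r. \<forall>l<m. R $$ (m-r+t, l) = W $$ (l,t)"
  proof (intro allI impI)
    fix t l assume t: "t < r" and l: "l < m"
    have e: "m - Suc r + Suc t = m - r + t" using rm by simp
    have st: "Suc t < Suc r" using t by simp
    have "R $$ (m - Suc r + Suc t, l) = ?W $$ (l, Suc t)" using R(3) st l by blast
    hence "R $$ (m-r+t, l) = ?W $$ (l, Suc t)" unfolding e .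
    thus "R $$ (m-r+t, l) = W $$ (l,t)" using l t by simp
  qed
  thus ?case using R by blast
qed

lemma extend:
  fixes W :: "'a::field mat"
  assumes "W \<in> carrier_mat m r" "ind W {..<r}"
  shows "\<exists>R. R \<in> carrier_mat m m \<and> invertible_mat R \<and> (\<forall>t<r. \<forall>l<m. R $$ (m-r+t, l) = W $$ (l,t))"
  using extend_aux[OF assms refl] .



lemma sel_delta:
  fixes x :: "'a::comm_ring_1 vec"
  assumes inj: "inj_on \<iota> {..<p}" and j0: "j0 < p"
  shows "(\<Sum>j<p. (if \<iota> j0 = \<iota> j then 1 else 0) * x $ j) = x $ j0"
proof -
  have "(\<Sum>j<p. (if \<iota> j0 = \<iota> j then 1 else 0) * x $ j) = (\<Sum>j<p. (if j = j0 then x $ j else 0))"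
  proof (rule sum.cong[OF refl])
    fix j assume "j \<in> {..<p}"
    hence "(\<iota> j0 = \<iota> j) = (j = j0)" using inj j0 by (auto dest: inj_onD)
    thus "(if \<iota> j0 = \<iota> j then 1 else 0) * x $ j = (if j = j0 then x $ j else 0)" by simp
  qed
  also have "\<dots> = x $ j0" using j0 by (simp add: sum.delta')
  finally show ?thesis .
qed

lemma mat_mult_entry_gen:
  fixes Z D :: "'a::comm_ring_1 mat"
  assumes "Z \<in> carrier_mat m N" "D \<in> carrier_mat N p" "l < m" "q < p"
  shows "(Z * D) $$ (l,q) = (\<Sum>t<N. Z $$ (l,t) * D $$ (t,q))"
  using assms by (auto simp: scalar_prod_def lessThan_atLeast0 intro!: sum.cong)

lemma ui_split:
  fixes Z :: "'a::field mat"
  assumes Z: "Z \<in> carrier_mat m N" and AB: "A \<union> B \<subseteq> {..<N}" and disj: "A \<inter> B = {}"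
    and iA: "ind Z A" and iB: "ind Z B"
  shows "\<exists>p q DI DU1 DU2. DI \<in> carrier_mat N p \<and> DU1 \<in> carrier_mat N q \<and> DU2 \<in> carrier_mat N q
     \<and> p + q = card A + card B
     \<and> ind (Z * DI) {..<p} \<and> ind (Z * DU1) {..<q} \<and> Z * DU1 = Z * DU2
     \<and> (\<forall>t<N. \<forall>j<p. DI $$ (t,j) \<noteq> 0 \<longrightarrow> t \<in> A \<union> B)
     \<and> (\<forall>t<N. \<forall>j<q. DU1 $$ (t,j) \<noteq> 0 \<longrightarrow> t \<in> A)
     \<and> (\<forall>t<N. \<forall>j<q. DU2 $$ (t,j) \<noteq> 0 \<longrightarrow> t \<in> B)"
proof -
  have finAB: "finite (A \<union> B)" using AB finite_subset by blast
  have finA: "finite A" and finB: "finite B" using finAB by auto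
  let ?P = "\<lambda>J. A \<subseteq> J \<and> J \<subseteq> A \<union> B \<and> ind Z J"
  have "?P A" using iA by simp
  moreover have "\<forall>J. ?P J \<longrightarrow> card J < Suc (card (A \<union> B))"
    using card_mono[OF finAB] by (simp add: le_imp_less_Suc)
  ultimately obtain J where J: "?P J" and Jmax: "\<And>J'. ?P J' \<Longrightarrow> card J' \<le> card J"
    using ex_has_greatest_nat[of ?P A card] by metis
  have finJ: "finite J" using J finAB finite_subset by blast
  have JN: "J \<subseteq> {..<N}" using J AB by blast
  define K where "K = B - J"
  have finK: "finite K" using finB unfolding K_def by simp
  have KB: "K \<subseteq> B" unfolding K_def by auto
  have KJ: "K \<inter> J = {}" unfolding K_def by auto
  have ex_e: "\<exists>e. e \<in> carrier_vec N \<and> (\<forall>t<N. t \<notin> insert b J \<longrightarrow> e $ t = 0) \<and> Z *\<^sub>v e = 0\<^sub>v m \<and> e $ b = 1"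
    if b: "b \<in> K" for b
  proof -
    have bJ: "b \<notin> J" using b unfolding K_def by simp
    have ci: "card (insert b J) = Suc (card J)" using bJ finJ by simp
    have "\<not> ?P (insert b J)"
    proof
      assume "?P (insert b J)"
      hence "card (insert b J) \<le> card J" by (rule Jmax)
      thus False using ci by simp
    qed
    moreover have "A \<subseteq> insert b J" "insert b J \<subseteq> A \<union> B" using J b KB by auto
    ultimately have ni: "\<not> ind Z (insert b J)" by blast
    have bN: "b < N" using b KB AB by auto
    have dZ: "dim_col Z = N" "dim_row Z = m" using Z by auto
    have sub: "insert b J \<subseteq> {..<dim_col Z}" using bN JN dZ by auto
    from ni sub obtain c where c: "c \<in> carrier_vec (dim_col Z)" "\<forall>t<dim_col Z. t \<notin> insert b J \<longrightarrow> c $ t = 0"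
       "Z *\<^sub>v c = 0\<^sub>v (dim_row Z)" "c \<noteq> 0\<^sub>v (dim_col Z)"
      unfolding ind_def by blast
    have cb: "c $ b \<noteq> 0"
    proof
      assume cb0: "c $ b = 0"
      have "\<forall>t<dim_col Z. t \<notin> J \<longrightarrow> c $ t = 0" using c(2) cb0 by auto
      hence "c = 0\<^sub>v (dim_col Z)" using J c(1,3) unfolding ind_def by blast
      thus False using c(4) by blast
    qed
    note c = c[unfolded dZ]
    define e where "e = (1 / c $ b) \<cdot>\<^sub>v c"
    have ec: "e \<in> carrier_vec N" unfolding e_def using c(1) by simp
    have "\<forall>t<N. t \<notin> insert b J \<longrightarrow> e $ t = 0" using c(1,2) unfolding e_def by auto
    moreover have "Z *\<^sub>v e = 0\<^sub>v m"
    proof -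
      have sz: "(1 / c $ b) \<cdot>\<^sub>v 0\<^sub>v m = (0\<^sub>v m :: 'a vec)" by (intro eq_vecI) auto
      show ?thesis unfolding e_def using mult_mat_vec[OF Z c(1)] c(3) sz by simp
    qed
    moreover have "e $ b = 1" unfolding e_def using c(1) cb bN by simp
    ultimately show ?thesis using ec by blast
  qed
  then obtain e where e: "\<And>b. b \<in> K \<Longrightarrow> e b \<in> carrier_vec N \<and> (\<forall>t<N. t \<notin> insert b J \<longrightarrow> e b $ t = 0) \<and> Z *\<^sub>v e b = 0\<^sub>v m \<and> e b $ b = 1"
    by metis
  define p where "p = card J"
  define q where "q = card K"
  define \<iota> where "\<iota> = (\<lambda>j. sorted_list_of_set J ! j)"
  define \<kappa> where "\<kappa> = (\<lambda>j. sorted_list_of_set K ! j)"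
  have bi: "bij_betw \<iota> {..<p} J" unfolding \<iota>_def p_def
    using bij_betw_nth[of "sorted_list_of_set J" "{..<card J}" J] finJ by simp
  have bk: "bij_betw \<kappa> {..<q} K" unfolding \<kappa>_def q_def
    using bij_betw_nth[of "sorted_list_of_set K" "{..<card K}" K] finK by simp
  have iJ: "\<And>j. j < p \<Longrightarrow> \<iota> j \<in> J" using bi bij_betwE by blast
  have kK: "\<And>j. j < q \<Longrightarrow> \<kappa> j \<in> K" using bk bij_betwE by blast
  have iinj: "inj_on \<iota> {..<p}" using bi bij_betw_imp_inj_on by blast
  have kinj: "inj_on \<kappa> {..<q}" using bk bij_betw_imp_inj_on by blast
  define DI where "DI = mat N p (\<lambda>(t,j). if t = \<iota> j then 1 else (0::'a))"
  define DU1 where "DU1 = mat N q (\<lambda>(t,j). if t \<in> A then e (\<kappa> j) $ t else 0)"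
  define DU2 where "DU2 = mat N q (\<lambda>(t,j). if t \<in> B then - e (\<kappa> j) $ t else 0)"
  have DI: "DI \<in> carrier_mat N p" and DU1: "DU1 \<in> carrier_mat N q" and DU2: "DU2 \<in> carrier_mat N q"
    unfolding DI_def DU1_def DU2_def by auto
  have ZDI: "Z * DI \<in> carrier_mat m p" using mult_carrier_mat[OF Z DI] .
  have ZDU1: "Z * DU1 \<in> carrier_mat m q" using mult_carrier_mat[OF Z DU1] .
  have ZDU2: "Z * DU2 \<in> carrier_mat m q" using mult_carrier_mat[OF Z DU2] .
  have dims[simp]: "dim_row (Z*DI) = m" "dim_col (Z*DI) = p" "dim_row (Z*DU1) = m" "dim_col (Z*DU1) = q"
    "dim_row (Z*DU2) = m" "dim_col (Z*DU2) = q" "dim_row DI = N" "dim_col DI = p" "dim_row DU1 = N"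
    "dim_col DU1 = q" "dim_row DU2 = N" "dim_col DU2 = q" "dim_row Z = m" "dim_col Z = N"
    using ZDI ZDU1 ZDU2 DI DU1 DU2 Z by auto
  have Jsplit: "J = A \<union> (J \<inter> B)" using J by auto
  have cJ: "card J = card A + card (J \<inter> B)"
    using card_Un_disjoint[OF finA _ ] finB disj Jsplit by (metis Int_assoc Int_empty_right Int_commute finite_Int)
  have cK: "card K = card B - card (J \<inter> B)" unfolding K_def
    by (metis Diff_Int2 Int_lower2 Int_absorb card_Diff_subset finB finite_Int inf.commute)
  have "card (J \<inter> B) \<le> card B" using card_mono[OF finB] by simp
  hence card_eq: "p + q = card A + card B" unfolding p_def q_def using cJ cK by simp
  have eqU: "Z * DU1 = Z * DU2"
  proof (rule eq_matI)
    fix l j assume "l < dim_row (Z * DU2)" "j < dim_col (Z * DU2)"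
    hence l: "l < m" and j: "j < q" using ZDU2 by auto
    have eb: "e (\<kappa> j) \<in> carrier_vec N" "\<forall>t<N. t \<notin> insert (\<kappa> j) J \<longrightarrow> e (\<kappa> j) $ t = 0" "Z *\<^sub>v e (\<kappa> j) = 0\<^sub>v m"
      using e[OF kK[OF j]] by auto
    have "(Z * DU1) $$ (l,j) - (Z * DU2) $$ (l,j) = (\<Sum>t<N. Z $$ (l,t) * DU1 $$ (t,j)) - (\<Sum>t<N. Z $$ (l,t) * DU2 $$ (t,j))"
      using mat_mult_entry_gen[OF Z DU1 l j] mat_mult_entry_gen[OF Z DU2 l j] by simp
    also have "\<dots> = (\<Sum>t<N. Z $$ (l,t) * (DU1 $$ (t,j) - DU2 $$ (t,j)))"
      by (simp add: sum_subtractf right_diff_distrib)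
    also have "\<dots> = (\<Sum>t<N. Z $$ (l,t) * e (\<kappa> j) $ t)"
    proof (rule sum.cong[OF refl])
      fix t assume t: "t \<in> {..<N}"
      have "DU1 $$ (t,j) - DU2 $$ (t,j) = e (\<kappa> j) $ t"
      proof (cases "t \<in> A")
        case True
        hence "t \<notin> B" using disj by auto
        thus ?thesis using True t j by (simp add: DU1_def DU2_def)
      next
        case False
        show ?thesis
        proof (cases "t \<in> B")
          case True thus ?thesis using False t j by (simp add: DU1_def DU2_def)
        next
          case nB: False
          have "t \<notin> insert (\<kappa> j) J" using False nB kK[OF j] KB J by auto
          hence "e (\<kappa> j) $ t = 0" using eb(2) t by simp
          thus ?thesis using False nB t j by (simp add: DU1_def DU2_def)
        qed
      qed
      thus "Z $$ (l,t) * (DU1 $$ (t,j) - DU2 $$ (t,j)) = Z $$ (l,t) * e (\<kappa> j) $ t" by simp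
    qed
    also have "\<dots> = (Z *\<^sub>v e (\<kappa> j)) $ l" using mult_mat_vec_sum[OF Z eb(1) l] by simp
    also have "\<dots> = 0" using eb(3) l by simp
    finally show "(Z * DU1) $$ (l,j) = (Z * DU2) $$ (l,j)" by simp
  qed (use DU1 DU2 ZDU1 ZDU2 in auto)
  have indI: "ind (Z * DI) {..<p}" unfolding ind_def
  proof (intro conjI ballI impI)
    show "{..<p} \<subseteq> {..<dim_col (Z * DI)}" using ZDI by simp
    fix x :: "'a vec" assume x: "x \<in> carrier_vec (dim_col (Z * DI))" and z: "(Z * DI) *\<^sub>v x = 0\<^sub>v (dim_row (Z * DI))"
    have xp: "x \<in> carrier_vec p" using x ZDI by simp
    have y: "DI *\<^sub>v x \<in> carrier_vec N" using mult_mat_vec_carrier[OF DI xp] .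
    have "Z *\<^sub>v (DI *\<^sub>v x) = 0\<^sub>v m" using z assoc_mult_mat_vec[OF Z DI xp] ZDI by simp
    moreover have "\<forall>t<dim_col Z. t \<notin> J \<longrightarrow> (DI *\<^sub>v x) $ t = 0"
    proof (intro allI impI)
      fix t assume t: "t < dim_col Z" "t \<notin> J"
      have tN: "t < N" using t Z by simp
      have "(DI *\<^sub>v x) $ t = (\<Sum>j<p. DI $$ (t,j) * x $ j)" using mult_mat_vec_sum[OF DI xp tN] .
      also have "\<dots> = 0" using iJ t tN by (intro sum.neutral) (auto simp: DI_def)
      finally show "(DI *\<^sub>v x) $ t = 0" .
    qed
    ultimately have y0: "DI *\<^sub>v x = 0\<^sub>v N" using J y Z unfolding ind_def by auto
    show "x = 0\<^sub>v (dim_col (Z * DI))"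
    proof (rule eq_vecI)
      fix j assume "j < dim_vec (0\<^sub>v (dim_col (Z * DI)) :: 'a vec)"
      hence j: "j < p" using ZDI by simp
      have iN: "\<iota> j < N" using iJ[OF j] JN by auto
      have "0 = (DI *\<^sub>v x) $ \<iota> j" using y0 iN by simp
      also have "\<dots> = (\<Sum>j'<p. DI $$ (\<iota> j,j') * x $ j')" using mult_mat_vec_sum[OF DI xp iN] .
      also have "\<dots> = (\<Sum>j'<p. (if \<iota> j = \<iota> j' then 1 else 0) * x $ j')"
        using iN by (intro sum.cong) (auto simp: DI_def)
      also have "\<dots> = x $ j" using sel_delta[OF iinj j] .
      finally show "x $ j = 0\<^sub>v (dim_col (Z * DI)) $ j" using j ZDI by simp
    qed (use x in simp)
  qed
  have indU: "ind (Z * DU1) {..<q}" unfolding ind_def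
  proof (intro conjI ballI impI)
    show "{..<q} \<subseteq> {..<dim_col (Z * DU1)}" using ZDU1 by simp
    fix x :: "'a vec" assume x: "x \<in> carrier_vec (dim_col (Z * DU1))" and z: "(Z * DU1) *\<^sub>v x = 0\<^sub>v (dim_row (Z * DU1))"
    have xq: "x \<in> carrier_vec q" using x ZDU1 by simp
    have y: "DU2 *\<^sub>v x \<in> carrier_vec N" using mult_mat_vec_carrier[OF DU2 xq] .
    have "Z *\<^sub>v (DU2 *\<^sub>v x) = 0\<^sub>v m" using z assoc_mult_mat_vec[OF Z DU2 xq] ZDU1 eqU by simp
    moreover have "\<forall>t<dim_col Z. t \<notin> B \<longrightarrow> (DU2 *\<^sub>v x) $ t = 0"
    proof (intro allI impI)
      fix t assume t: "t < dim_col Z" "t \<notin> B"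
      have tN: "t < N" using t Z by simp
      have "(DU2 *\<^sub>v x) $ t = (\<Sum>j<q. DU2 $$ (t,j) * x $ j)" using mult_mat_vec_sum[OF DU2 xq tN] .
      also have "\<dots> = 0" using t tN by (intro sum.neutral) (auto simp: DU2_def)
      finally show "(DU2 *\<^sub>v x) $ t = 0" .
    qed
    ultimately have y0: "DU2 *\<^sub>v x = 0\<^sub>v N" using iB y Z unfolding ind_def by auto
    show "x = 0\<^sub>v (dim_col (Z * DU1))"
    proof (rule eq_vecI)
      fix j assume "j < dim_vec (0\<^sub>v (dim_col (Z * DU1)) :: 'a vec)"
      hence j: "j < q" using ZDU1 by simp
      have kB: "\<kappa> j \<in> B" using kK[OF j] KB by auto
      have kN: "\<kappa> j < N" using kB AB by auto
      have "0 = (DU2 *\<^sub>v x) $ \<kappa> j" using y0 kN by simp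
      also have "\<dots> = (\<Sum>j'<q. DU2 $$ (\<kappa> j,j') * x $ j')" using mult_mat_vec_sum[OF DU2 xq kN] .
      also have "\<dots> = (\<Sum>j'<q. - ((if \<kappa> j = \<kappa> j' then 1 else 0) * x $ j'))"
      proof (rule sum.cong[OF refl])
        fix j' assume j': "j' \<in> {..<q}"
        have ej: "\<forall>t<N. t \<notin> insert (\<kappa> j') J \<longrightarrow> e (\<kappa> j') $ t = 0" "e (\<kappa> j') $ \<kappa> j' = 1"
          using e[OF kK] j' by auto
        have "e (\<kappa> j') $ \<kappa> j = (if \<kappa> j = \<kappa> j' then 1 else 0)"
        proof (cases "\<kappa> j = \<kappa> j'")
          case False
          have "\<kappa> j \<notin> J" using kK[OF j] KJ by auto
          hence "\<kappa> j \<notin> insert (\<kappa> j') J" using False by simp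
          thus ?thesis using ej(1) kN False by simp
        qed (use ej(2) in simp)
        thus "DU2 $$ (\<kappa> j,j') * x $ j' = - ((if \<kappa> j = \<kappa> j' then 1 else 0) * x $ j')"
          using kB kN j' by (simp add: DU2_def)
      qed
      also have "\<dots> = - x $ j" using sel_delta[OF kinj j, of x] by (simp add: sum_negf)
      finally show "x $ j = 0\<^sub>v (dim_col (Z * DU1)) $ j" using j ZDU1 by simp
    qed (use x in simp)
  qed
  have sI: "\<forall>t<N. \<forall>j<p. DI $$ (t,j) \<noteq> 0 \<longrightarrow> t \<in> A \<union> B"
    using iJ J unfolding DI_def by auto
  have sU1: "\<forall>t<N. \<forall>j<q. DU1 $$ (t,j) \<noteq> 0 \<longrightarrow> t \<in> A" unfolding DU1_def by auto
  have sU2: "\<forall>t<N. \<forall>j<q. DU2 $$ (t,j) \<noteq> 0 \<longrightarrow> t \<in> B" unfolding DU2_def by auto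
  show ?thesis using DI DU1 DU2 card_eq indI indU eqU sI sU1 sU2 by blast
qed



lemma ind_stack_A:
  fixes R1 R2 :: "'a::field mat"
  assumes R1: "R1 \<in> carrier_mat m m" and i1: "invertible_mat R1"
    and Zd: "Zm = mat m (m+m) (\<lambda>(l,j). if j < m then R1 $$ (j,l) else R2 $$ (j-m,l))"
    and A: "A \<subseteq> {..<m}"
  shows "ind Zm A"
  unfolding ind_def
proof (intro conjI ballI impI)
  show "A \<subseteq> {..<dim_col Zm}" using A Zd by auto
  fix c :: "'a vec" assume c: "c \<in> carrier_vec (dim_col Zm)" and sup: "\<forall>j<dim_col Zm. j \<notin> A \<longrightarrow> c $ j = 0"
    and z: "Zm *\<^sub>v c = 0\<^sub>v (dim_row Zm)"
  have Zc: "Zm \<in> carrier_mat m (m+m)" using Zd by simp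
  have cc: "c \<in> carrier_vec (m+m)" using c Zd by simp
  define c1 where "c1 = vec m (\<lambda>j. c $ j)"
  have c1c: "c1 \<in> carrier_vec m" unfolding c1_def by simp
  have hi: "c $ j = 0" if "m \<le> j" "j < m+m" for j using sup that A Zd by auto
  have RT: "transpose_mat R1 \<in> carrier_mat m m" using R1 by simp
  have "transpose_mat R1 *\<^sub>v c1 = 0\<^sub>v m"
  proof (rule eq_vecI)
    fix l assume "l < dim_vec (0\<^sub>v m :: 'a vec)"
    hence l: "l < m" by simp
    have "(transpose_mat R1 *\<^sub>v c1) $ l = (\<Sum>j<m. transpose_mat R1 $$ (l,j) * c1 $ j)"
      using mult_mat_vec_sum[OF RT c1c l] .
    also have "\<dots> = (\<Sum>j<m. Zm $$ (l,j) * c $ j)"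
      using l R1 Zd by (intro sum.cong) (auto simp: c1_def)
    also have "\<dots> = (\<Sum>j<m. Zm $$ (l,j) * c $ j) + (\<Sum>j<(m+m)-m. Zm $$ (l,m+j) * c $ (m+j))"
      using hi by simp
    also have "\<dots> = (\<Sum>j<m+m. Zm $$ (l,j) * c $ j)"
      using sum_split_at[of m "m+m" "\<lambda>j. Zm $$ (l,j) * c $ j"] by simp
    also have "\<dots> = (Zm *\<^sub>v c) $ l" using mult_mat_vec_sum[OF Zc cc l] by simp
    also have "\<dots> = 0" using z l Zd by simp
    finally show "(transpose_mat R1 *\<^sub>v c1) $ l = 0\<^sub>v m $ l" using l by simp
  qed (use RT in simp)
  hence c10: "c1 = 0\<^sub>v m" using invertible_transpose_cancel[OF R1 i1 c1c] by simp
  show "c = 0\<^sub>v (dim_col Zm)"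
  proof (rule eq_vecI)
    fix j assume "j < dim_vec (0\<^sub>v (dim_col Zm) :: 'a vec)"
    hence j: "j < m + m" using Zd by simp
    show "c $ j = 0\<^sub>v (dim_col Zm) $ j"
    proof (cases "j < m")
      case True
      have "c $ j = c1 $ j" using True by (simp add: c1_def)
      thus ?thesis using c10 True j Zd by simp
    next
      case False thus ?thesis using hi[of j] j Zd by simp
    qed
  qed (use c in simp)
qed

lemma ind_stack_B:
  fixes R1 R2 :: "'a::field mat"
  assumes R2: "R2 \<in> carrier_mat m m" and i2: "invertible_mat R2"
    and Zd: "Zm = mat m (m+m) (\<lambda>(l,j). if j < m then R1 $$ (j,l) else R2 $$ (j-m,l))"
    and B: "B \<subseteq> {m..<m+m}"
  shows "ind Zm B"
  unfolding ind_def
proof (intro conjI ballI impI)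
  show "B \<subseteq> {..<dim_col Zm}" using B Zd by auto
  fix c :: "'a vec" assume c: "c \<in> carrier_vec (dim_col Zm)" and sup: "\<forall>j<dim_col Zm. j \<notin> B \<longrightarrow> c $ j = 0"
    and z: "Zm *\<^sub>v c = 0\<^sub>v (dim_row Zm)"
  have Zc: "Zm \<in> carrier_mat m (m+m)" using Zd by simp
  have cc: "c \<in> carrier_vec (m+m)" using c Zd by simp
  define c2 where "c2 = vec m (\<lambda>j. c $ (m+j))"
  have c2c: "c2 \<in> carrier_vec m" unfolding c2_def by simp
  have lo: "c $ j = 0" if "j < m" for j
  proof -
    have "j \<notin> B" using that B by auto
    moreover have "j < dim_col Zm" using that Zd by simp
    ultimately show ?thesis using sup by blast
  qed
  have RT: "transpose_mat R2 \<in> carrier_mat m m" using R2 by simp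
  have "transpose_mat R2 *\<^sub>v c2 = 0\<^sub>v m"
  proof (rule eq_vecI)
    fix l assume "l < dim_vec (0\<^sub>v m :: 'a vec)"
    hence l: "l < m" by simp
    have "(transpose_mat R2 *\<^sub>v c2) $ l = (\<Sum>j<m. transpose_mat R2 $$ (l,j) * c2 $ j)"
      using mult_mat_vec_sum[OF RT c2c l] .
    also have "\<dots> = (\<Sum>j<(m+m)-m. Zm $$ (l,m+j) * c $ (m+j))"
      using l R2 Zd by (intro sum.cong) (auto simp: c2_def)
    also have "\<dots> = (\<Sum>j<m. Zm $$ (l,j) * c $ j) + (\<Sum>j<(m+m)-m. Zm $$ (l,m+j) * c $ (m+j))"
      using lo by simp
    also have "\<dots> = (\<Sum>j<m+m. Zm $$ (l,j) * c $ j)"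
      using sum_split_at[of m "m+m" "\<lambda>j. Zm $$ (l,j) * c $ j"] by simp
    also have "\<dots> = (Zm *\<^sub>v c) $ l" using mult_mat_vec_sum[OF Zc cc l] by simp
    also have "\<dots> = 0" using z l Zd by simp
    finally show "(transpose_mat R2 *\<^sub>v c2) $ l = 0\<^sub>v m $ l" using l by simp
  qed (use RT in simp)
  hence c20: "c2 = 0\<^sub>v m" using invertible_transpose_cancel[OF R2 i2 c2c] by simp
  show "c = 0\<^sub>v (dim_col Zm)"
  proof (rule eq_vecI)
    fix j assume "j < dim_vec (0\<^sub>v (dim_col Zm) :: 'a vec)"
    hence j: "j < m + m" using Zd by simp
    show "c $ j = 0\<^sub>v (dim_col Zm) $ j"
    proof (cases "j < m")
      case False
      have "m + (j - m) = j" using False by simp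
      hence "c $ j = c2 $ (j - m)" using False j by (simp add: c2_def)
      thus ?thesis using c20 False j Zd by simp
    next
      case True thus ?thesis using lo[of j] j Zd by simp
    qed
  qed (use c in simp)
qed



lemma fl_unfold:
  "factor_like Z k M F \<longleftrightarrow> F \<subseteq> {0..<dim_col M} \<and>
     (\<exists>R r. R \<in> carrier_mat (dim_row M) (dim_row M) \<and> invertible_mat R \<and> r \<le> dim_row M \<and>
        zero_lower_left (Pmat R M F) r (card F) \<and> Z r (card F) (dim_row M) (dim_col M) \<and>
        FRmR k (blockA (Pmat R M F) r (card F)) \<and> FCmR k (blockC (Pmat R M F) r (card F)))"
  by (simp add: factor_like_def Let_def Pmat_def)

lemma ann_cong:
  assumes "\<And>l. l < dim_row M \<Longrightarrow> w l = w' l"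
  shows "ann M F w = ann M F w'"
proof -
  have "(\<Sum>l<dim_row M. w l * (M $$ (l, j)) v) = (\<Sum>l<dim_row M. w' l * (M $$ (l, j)) v)" for j v
    using assms by (intro sum.cong) auto
  thus ?thesis unfolding ann_def by simp
qed

lemma new_set:
  fixes M :: "'a::field aff mat" and Zm W :: "'a mat"
  assumes m: "dim_row M = m" and G: "G \<subseteq> {0..<dim_col M}"
    and W: "W \<in> carrier_mat m p" and iW: "ind W {..<p}"
    and annW: "\<And>t. t < p \<Longrightarrow> ann M G (\<lambda>l. W $$ (l,t))"
  shows "\<exists>R. R \<in> carrier_mat m m \<and> invertible_mat R \<and> p \<le> m \<and> zero_lower_left (Pmat R M G) p (card G)"
proof -
  have pm: "p \<le> m" using ind_card_le_nr[OF W iW] by simp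
  obtain R where R: "R \<in> carrier_mat m m" "invertible_mat R" "\<forall>t<p. \<forall>l<m. R $$ (m-p+t, l) = W $$ (l,t)"
    using extend[OF W iW] by blast
  have "\<forall>t<p. ann M G (\<lambda>l. R $$ (m-p+t, l))"
  proof (intro allI impI)
    fix t assume t: "t < p"
    have "ann M G (\<lambda>l. R $$ (m-p+t, l)) = ann M G (\<lambda>l. W $$ (l,t))"
      using R(3) t m by (intro ann_cong) auto
    thus "ann M G (\<lambda>l. R $$ (m-p+t, l))" using annW[OF t] by simp
  qed
  hence "zero_lower_left (Pmat R M G) p (card G)" using zll_iff[OF R(1) m G pm] by simp
  thus ?thesis using R pm by blast
qed

lemma main_generic:
  fixes M :: "'a::field aff mat"
  assumes aci: "aci_matrix k M" and ne: "F1 \<inter> F2 \<noteq> {}"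
    and f1: "factor_like Z k M F1" and f2: "factor_like Z k M F2"
    and Zn: "\<And>r s. Z r s (dim_row M) (dim_col M) \<Longrightarrow> dim_col M \<le> r + s"
    and Zd: "\<And>r s r' s'. r + s = r' + s' \<Longrightarrow> Z r s (dim_row M) (dim_col M) = Z r' s' (dim_row M) (dim_col M)"
  shows "factor_like Z k M (F1 \<inter> F2) \<and> factor_like Z k M (F1 \<union> F2)"
proof -
  define m where "m = dim_row M"
  define n where "n = dim_col M"
  have mM: "dim_row M = m" and nM: "dim_col M = n" unfolding m_def n_def by simp_all
  have F1: "F1 \<subseteq> {0..<n}" using f1 unfolding fl_unfold nM by blast
  have F2: "F2 \<subseteq> {0..<n}" using f2 unfolding fl_unfold nM by blast
  obtain R1 r1 where R1: "R1 \<in> carrier_mat m m" "invertible_mat R1" "r1 \<le> m"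
    "zero_lower_left (Pmat R1 M F1) r1 (card F1)" "Z r1 (card F1) m n"
    "FRmR k (blockA (Pmat R1 M F1) r1 (card F1))" "FCmR k (blockC (Pmat R1 M F1) r1 (card F1))"
    using f1 unfolding fl_unfold mM nM by blast
  obtain R2 r2 where R2: "R2 \<in> carrier_mat m m" "invertible_mat R2" "r2 \<le> m"
    "zero_lower_left (Pmat R2 M F2) r2 (card F2)" "Z r2 (card F2) m n"
    "FRmR k (blockA (Pmat R2 M F2) r2 (card F2))" "FCmR k (blockC (Pmat R2 M F2) r2 (card F2))"
    using f2 unfolding fl_unfold mM nM by blast
  define s1 where "s1 = card F1"
  define s2 where "s2 = card F2"
  have s1n: "s1 \<le> n" using card_le_n[OF F1] unfolding s1_def .
  have s2n: "s2 \<le> n" using card_le_n[OF F2] unfolding s2_def .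
  have F1ne: "F1 \<noteq> {}" and F2ne: "F2 \<noteq> {}" using ne by auto
  have big1: "n \<le> r1 + s1" using Zn R1(5) unfolding mM nM s1_def .
  have big2: "n \<le> r2 + s2" using Zn R2(5) unfolding mM nM s2_def .
  have e1: "maxRank k M = (m - r1) + (n - s1)"
    using factor_rank[OF aci mM nM R1(1,2) F1 F1ne s1_def R1(3) R1(4)[folded s1_def] big1 R1(6,7)[folded s1_def]] .
  have e2: "maxRank k M = (m - r2) + (n - s2)"
    using factor_rank[OF aci mM nM R2(1,2) F2 F2ne s2_def R2(3) R2(4)[folded s2_def] big2 R2(6,7)[folded s2_def]] .
  have ann1: "ann M F1 (\<lambda>l. R1 $$ (t, l))" if "t \<in> {m-r1..<m}" for t
  proof -
    have "\<forall>t<r1. ann M F1 (\<lambda>l. R1 $$ (m-r1+t, l))" using zll_iff[OF R1(1) mM _ R1(3)] F1 nM R1(4) by simp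
    moreover have "t - (m - r1) < r1" "m - r1 + (t - (m - r1)) = t" using that R1(3) by auto
    ultimately show ?thesis by metis
  qed
  have ann2: "ann M F2 (\<lambda>l. R2 $$ (t, l))" if "t \<in> {m-r2..<m}" for t
  proof -
    have "\<forall>t<r2. ann M F2 (\<lambda>l. R2 $$ (m-r2+t, l))" using zll_iff[OF R2(1) mM _ R2(3)] F2 nM R2(4) by simp
    moreover have "t - (m - r2) < r2" "m - r2 + (t - (m - r2)) = t" using that R2(3) by auto
    ultimately show ?thesis by metis
  qed
  define Zm where "Zm = mat m (m+m) (\<lambda>(l,j). if j < m then R1 $$ (j,l) else R2 $$ (j-m,l))"
  have Zc: "Zm \<in> carrier_mat m (m+m)" unfolding Zm_def by simp
  define A where "A = {m-r1..<m}"
  define B where "B = {m+m-r2..<m+m}"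
  have AB: "A \<union> B \<subseteq> {..<m+m}" unfolding A_def B_def by auto
  have disj: "A \<inter> B = {}" unfolding A_def B_def using R2(3) by auto
  have "A \<subseteq> {..<m}" unfolding A_def by auto
  hence iA: "ind Zm A" using ind_stack_A[OF R1(1,2) Zm_def] by blast
  have "B \<subseteq> {m..<m+m}" unfolding B_def using R2(3) by auto
  hence iB: "ind Zm B" using ind_stack_B[OF R2(1,2) Zm_def] by blast
  have cA: "card A = r1" unfolding A_def using R1(3) by simp
  have cB: "card B = r2" unfolding B_def using R2(3) by simp
  have annA: "ann M F1 (\<lambda>l. Zm $$ (l,t))" if "t \<in> A" for t
  proof -
    have "ann M F1 (\<lambda>l. Zm $$ (l,t)) = ann M F1 (\<lambda>l. R1 $$ (t,l))"
      using that mM unfolding A_def Zm_def by (intro ann_cong) auto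
    thus ?thesis using ann1 that unfolding A_def by simp
  qed
  have annB: "ann M F2 (\<lambda>l. Zm $$ (l,t))" if "t \<in> B" for t
  proof -
    have tm: "t - m \<in> {m-r2..<m}" using that R2(3) unfolding B_def by auto
    have "ann M F2 (\<lambda>l. Zm $$ (l,t)) = ann M F2 (\<lambda>l. R2 $$ (t - m,l))"
      using that mM R2(3) unfolding B_def Zm_def by (intro ann_cong) auto
    thus ?thesis using ann2[OF tm] by simp
  qed
  obtain p q DI DU1 DU2 where D: "DI \<in> carrier_mat (m+m) p" "DU1 \<in> carrier_mat (m+m) q" "DU2 \<in> carrier_mat (m+m) q"
     "p + q = card A + card B"
     "ind (Zm * DI) {..<p}" "ind (Zm * DU1) {..<q}" "Zm * DU1 = Zm * DU2"
     "\<forall>t<m+m. \<forall>j<p. DI $$ (t,j) \<noteq> 0 \<longrightarrow> t \<in> A \<union> B"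
     "\<forall>t<m+m. \<forall>j<q. DU1 $$ (t,j) \<noteq> 0 \<longrightarrow> t \<in> A"
     "\<forall>t<m+m. \<forall>j<q. DU2 $$ (t,j) \<noteq> 0 \<longrightarrow> t \<in> B"
    using ui_split[OF Zc AB disj iA iB] by blast
  define I where "I = F1 \<inter> F2"
  define U where "U = F1 \<union> F2"
  have I: "I \<subseteq> {0..<dim_col M}" using F1 nM unfolding I_def by auto
  have U: "U \<subseteq> {0..<dim_col M}" using F1 F2 nM unfolding U_def by auto
  have WI: "Zm * DI \<in> carrier_mat m p" using mult_carrier_mat[OF Zc D(1)] .
  have WU: "Zm * DU1 \<in> carrier_mat m q" using mult_carrier_mat[OF Zc D(2)] .
  have annI: "ann M I (\<lambda>l. (Zm * DI) $$ (l,t))" if "t < p" for t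
  proof (rule ann_comb[OF Zc D(1) that mM])
    fix t' assume "t' < m + m" "DI $$ (t',t) \<noteq> 0"
    hence "t' \<in> A \<union> B" using D(8) that by blast
    thus "ann M I (\<lambda>l. Zm $$ (l,t'))" using annA annB ann_mono unfolding I_def by blast
  qed
  have annU: "ann M U (\<lambda>l. (Zm * DU1) $$ (l,t))" if "t < q" for t
  proof -
    have a1: "ann M F1 (\<lambda>l. (Zm * DU1) $$ (l,t))"
    proof (rule ann_comb[OF Zc D(2) that mM])
      fix t' assume "t' < m + m" "DU1 $$ (t',t) \<noteq> 0"
      hence "t' \<in> A" using D(9) that by blast
      thus "ann M F1 (\<lambda>l. Zm $$ (l,t'))" using annA by blast
    qed
    have a2: "ann M F2 (\<lambda>l. (Zm * DU2) $$ (l,t))"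
    proof (rule ann_comb[OF Zc D(3) that mM])
      fix t' assume "t' < m + m" "DU2 $$ (t',t) \<noteq> 0"
      hence "t' \<in> B" using D(10) that by blast
      thus "ann M F2 (\<lambda>l. Zm $$ (l,t'))" using annB by blast
    qed
    show ?thesis using ann_Un[OF a1 a2[folded D(7)]] unfolding U_def .
  qed
  obtain RI where RI: "RI \<in> carrier_mat m m" "invertible_mat RI" "p \<le> m" "zero_lower_left (Pmat RI M I) p (card I)"
    using new_set[OF mM I WI D(5) annI] by blast
  obtain RU where RU: "RU \<in> carrier_mat m m" "invertible_mat RU" "q \<le> m" "zero_lower_left (Pmat RU M U) q (card U)"
    using new_set[OF mM U WU D(6) annU] by blast
  have I': "I \<subseteq> {0..<n}" and U': "U \<subseteq> {0..<n}" using I U nM by auto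
  have uI: "maxRank k M \<le> (m - p) + (n - card I)"
    using upper_rank[OF mM nM RI(1,2) I' refl RI(3,4)] .
  have uU: "maxRank k M \<le> (m - q) + (n - card U)"
    using upper_rank[OF mM nM RU(1,2) U' refl RU(3,4)] .
  have finF1: "finite F1" and finF2: "finite F2" using F1 F2 finite_subset by auto
  have cardIU: "card I + card U = s1 + s2" unfolding I_def U_def s1_def s2_def
    using card_Un_Int[OF finF1 finF2] by simp
  have sIn: "card I \<le> n" using card_le_n[OF I'] .
  have sUn: "card U \<le> n" using card_le_n[OF U'] .
  have pq: "p + q = r1 + r2" using D(4) cA cB by simp
  have e1': "maxRank k M + r1 + s1 = m + n" using e1 R1(3) s1n by simp
  have e2': "maxRank k M + r2 + s2 = m + n" using e2 R2(3) s2n by simp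
  have uI': "maxRank k M + p + card I \<le> m + n" using uI RI(3) sIn by simp
  have uU': "maxRank k M + q + card U \<le> m + n" using uU RU(3) sUn by simp
  have eqI': "maxRank k M + p + card I = m + n" using e1' e2' uI' uU' cardIU pq by linarith
  have eqU': "maxRank k M + q + card U = m + n" using e1' e2' uI' uU' cardIU pq by linarith
  have eqI: "maxRank k M = (m - p) + (n - card I)" using eqI' RI(3) sIn by simp
  have eqU: "maxRank k M = (m - q) + (n - card U)" using eqU' RU(3) sUn by simp
  have hI: "p + card I = r1 + s1" using eqI' e1' by linarith
  have hU: "q + card U = r1 + s1" using eqU' e1' by linarith
  have ZI: "Z p (card I) m n" using Zd[of p "card I" r1 s1] hI R1(5) unfolding mM nM s1_def by simp
  have ZU: "Z q (card U) m n" using Zd[of q "card U" r1 s1] hU R1(5) unfolding mM nM s1_def by simp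
  have cI: "FRmR k (blockA (Pmat RI M I) p (card I)) \<and> FCmR k (blockC (Pmat RI M I) p (card I))"
    using converse_fl[OF mM nM RI(1,2) I' refl RI(3,4)] eqI by simp
  have cU: "FRmR k (blockA (Pmat RU M U) q (card U)) \<and> FCmR k (blockC (Pmat RU M U) q (card U))"
    using converse_fl[OF mM nM RU(1,2) U' refl RU(3,4)] eqU by simp
  have "factor_like Z k M I" unfolding fl_unfold mM nM
    using I' RI cI ZI by blast
  moreover have "factor_like Z k M U" unfolding fl_unfold mM nM
    using U' RU cU ZU by blast
  ultimately show ?thesis unfolding I_def U_def by simp
qed

theorem theorem5p5:
  fixes M :: "'a::field aff mat" and k :: nat and F1 F2 :: "nat set"
  assumes "aci_matrix k M"
    and "F1 \<inter> F2 \<noteq> {}"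
  shows "(factor_set k M F1 \<and> factor_set k M F2 \<longrightarrow>
            factor_set k M (F1 \<inter> F2) \<and> factor_set k M (F1 \<union> F2)) \<and>
         (semifactor_set k M F1 \<and> semifactor_set k M F2 \<longrightarrow>
            semifactor_set k M (F1 \<inter> F2) \<and> semifactor_set k M (F1 \<union> F2))"
proof (rule conjI; rule impI)
  assume a: "factor_set k M F1 \<and> factor_set k M F2"
  let ?Z = "\<lambda>r s m n. max m n < (r::nat) + s"
  have f1: "factor_like ?Z k M F1" and f2: "factor_like ?Z k M F2" using a unfolding factor_set_def by auto
  have Zn: "\<And>r s. ?Z r s (dim_row M) (dim_col M) \<Longrightarrow> dim_col M \<le> r + s" by simp
  have Zd: "\<And>r s r' s'. r + s = r' + s' \<Longrightarrow> ?Z r s (dim_row M) (dim_col M) = ?Z r' s' (dim_row M) (dim_col M)"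
    by simp
  show "factor_set k M (F1 \<inter> F2) \<and> factor_set k M (F1 \<union> F2)"
    unfolding factor_set_def using main_generic[OF assms f1 f2 Zn Zd] by simp
next
  assume a: "semifactor_set k M F1 \<and> semifactor_set k M F2"
  let ?Z = "\<lambda>r s m n. (r::nat) + s = max m n"
  have f1: "factor_like ?Z k M F1" and f2: "factor_like ?Z k M F2" using a unfolding semifactor_set_def by auto
  have Zn: "\<And>r s. ?Z r s (dim_row M) (dim_col M) \<Longrightarrow> dim_col M \<le> r + s" by simp
  have Zd: "\<And>r s r' s'. r + s = r' + s' \<Longrightarrow> ?Z r s (dim_row M) (dim_col M) = ?Z r' s' (dim_row M) (dim_col M)"
    by simp
  show "semifactor_set k M (F1 \<inter> F2) \<and> semifactor_set k M (F1 \<union> F2)"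
    unfolding semifactor_set_def using main_generic[OF assms f1 f2 Zn Zd] by simp
qed

end
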